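(* Let $d\ge2$, $\sigma>0$, let $\mu_0^\star,\mu_1^\star\in\mathbb{S}^{d-1}$ be orthonormal, and for each $L\ge1$ let $(X_\ell,Z_\ell)_{1\le\ell\le L}$ be i.i.d. with $Z_\ell\sim\mathrm{Bernoulli}(1/2)$ and $X_\ell\mid Z_\ell\sim\mathcal{N}(\mu_{Z_\ell}^\star,\sigma^2I_d)$. If $\lambda=\frac{1+4\sigma^2+4\sigma^4}{1+6\sigma^2+12\sigma^4+8\sigma^6}$, then $$\lim_{L\to\infty}\mathcal{L}(T^{\mathrm{lin},\mu_0^\star,\mu_1^\star})=\sigma^2(d-2).$$ Moreover, for any fixed $\lambda>0$ (independent of $L$) and $c\in\{0,1\}$, $$\lim_{L\to\infty}\mathrm{Var}[T^{\mathrm{lin},\mu_0^\star,\mu_1^\star}(\mathbb{X})_1\mid Z_1=c]=2\lambda^2\sigma^2(1+2\sigma^2)^2.$$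
   Context: $\mathbb{X}\in\mathbb{R}^{L\times d}$ has rows $X_1,\dots,X_L$; $T^{\mathrm{lin},\mu_0,\mu_1}(\mathbb{X})_\ell=\frac{2}{L}\sum_{k=1}^L\lambda\,X_\ell^\top(\mu_0\mu_0^\top+\mu_1\mu_1^\top)X_k\,X_k$. The loss is $\mathcal{L}(T)=\frac1L\sum_{\ell=1}^L\mathbb{E}\|X_\ell-T(\mathbb{X})_\ell\|_2^2$. For a random vector $Y$, $\mathrm{Var}[Y\mid Z_1=c]=\mathbb{E}[\|Y-\mathbb{E}[Y\mid Z_1=c]\|_2^2\mid Z_1=c]$. *)

theory Defs
  imports "HOL-Probability.Probability"
begin

definition gauss_density :: "real^'n \<Rightarrow> real \<Rightarrow> real^'n \<Rightarrow> real" where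
  "gauss_density \<mu> \<sigma> x = (\<Prod>i\<in>UNIV. normal_density (\<mu> $ i) \<sigma> (x $ i))"

text \<open>Law of one pair (Z, X): Z ~ Bernoulli(1/2) (True means Z = 1),
  X given Z ~ N(mu_Z, sigma^2 I_d).\<close>
definition sample_M :: "real^'n \<Rightarrow> real^'n \<Rightarrow> real \<Rightarrow> (bool \<times> (real^'n)) measure" where
  "sample_M \<mu>0 \<mu>1 \<sigma> = density (count_space UNIV \<Otimes>\<^sub>M lborel)
     (\<lambda>(z, x). ennreal (1/2 * gauss_density (if z then \<mu>1 else \<mu>0) \<sigma> x))"

text \<open>L i.i.d. pairs, indexed 0..L-1 (index 0 plays the role of l = 1).\<close>
definition seq_M :: "nat \<Rightarrow> real^'n \<Rightarrow> real^'n \<Rightarrow> real \<Rightarrow> (nat \<Rightarrow> bool \<times> (real^'n)) measure" where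
  "seq_M L \<mu>0 \<mu>1 \<sigma> = PiM {..<L} (\<lambda>_. sample_M \<mu>0 \<mu>1 \<sigma>)"

definition T_lin :: "real \<Rightarrow> real^'n \<Rightarrow> real^'n \<Rightarrow> nat \<Rightarrow> (nat \<Rightarrow> real^'n) \<Rightarrow> nat \<Rightarrow> real^'n" where
  "T_lin lam \<mu>0 \<mu>1 L X l = (2 / real L) *\<^sub>R
     (\<Sum>k<L. (lam * ((X l \<bullet> \<mu>0) * (\<mu>0 \<bullet> X k) + (X l \<bullet> \<mu>1) * (\<mu>1 \<bullet> X k))) *\<^sub>R X k)"

definition lin_loss :: "real \<Rightarrow> real^'n \<Rightarrow> real^'n \<Rightarrow> real \<Rightarrow> nat \<Rightarrow> real" where
  "lin_loss lam \<mu>0 \<mu>1 \<sigma> L = (1 / real L) * (\<Sum>l<L.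
     (\<integral>\<omega>. (norm (snd (\<omega> l) - T_lin lam \<mu>0 \<mu>1 L (\<lambda>k. snd (\<omega> k)) l))\<^sup>2 \<partial>seq_M L \<mu>0 \<mu>1 \<sigma>))"

definition cond_exp_event :: "'a measure \<Rightarrow> 'a set \<Rightarrow> ('a \<Rightarrow> 'b::{banach, second_countable_topology}) \<Rightarrow> 'b" where
  "cond_exp_event M A Y = (1 / measure M A) *\<^sub>R (\<integral>\<omega>. indicator A \<omega> *\<^sub>R Y \<omega> \<partial>M)"

definition cond_var_event :: "'a measure \<Rightarrow> 'a set \<Rightarrow> ('a \<Rightarrow> 'b::{banach, second_countable_topology}) \<Rightarrow> real" where
  "cond_var_event M A Y = cond_exp_event M A (\<lambda>\<omega>. (norm (Y \<omega> - cond_exp_event M A Y))\<^sup>2)"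

text \<open>Var[T(X)_1 | Z_1 = c] for sequence length L (c = True means c = 1).\<close>
definition lin_cond_var :: "real \<Rightarrow> real^'n \<Rightarrow> real^'n \<Rightarrow> real \<Rightarrow> bool \<Rightarrow> nat \<Rightarrow> real" where
  "lin_cond_var lam \<mu>0 \<mu>1 \<sigma> c L =
     cond_var_event (seq_M L \<mu>0 \<mu>1 \<sigma>) {\<omega>\<in>space (seq_M L \<mu>0 \<mu>1 \<sigma>). fst (\<omega> 0) = c}
       (\<lambda>\<omega>. T_lin lam \<mu>0 \<mu>1 L (\<lambda>k. snd (\<omega> k)) 0)"

end

theory Submission
  imports Defs
begin


lemma nd_int_pow:
  assumes s: "0 < \<sigma>"
  shows "integrable lborel (\<lambda>t. normal_density m \<sigma> t * t ^ k)"
proof -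
  have eq: "(\<lambda>t. normal_density m \<sigma> t * t ^ k) =
     (\<lambda>t. \<Sum>j\<le>k. (of_nat (k choose j) * m ^ (k - j)) * (normal_density m \<sigma> t * (t - m) ^ j))"
  proof
    fix t
    have "t ^ k = ((t - m) + m) ^ k" by simp
    also have "\<dots> = (\<Sum>j\<le>k. of_nat (k choose j) * (t - m) ^ j * m ^ (k - j))"
      by (rule binomial_ring)
    finally show "normal_density m \<sigma> t * t ^ k =
       (\<Sum>j\<le>k. (of_nat (k choose j) * m ^ (k - j)) * (normal_density m \<sigma> t * (t - m) ^ j))"
      by (simp add: sum_distrib_left algebra_simps)
  qed
  show ?thesis unfolding eq
    apply (rule Bochner_Integration.integrable_sum)
    apply (rule integrable_mult_right)
    apply (rule integrable_normal_moment[OF s])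
    done
qed

lemma nd_int_0: "0 < \<sigma> \<Longrightarrow> (\<integral>t. normal_density m \<sigma> t * t ^ 0 \<partial>lborel) = 1"
  by simp

lemma nd_int_1: "0 < \<sigma> \<Longrightarrow> (\<integral>t. normal_density m \<sigma> t * t ^ 1 \<partial>lborel) = m"
  using integral_normal_moment_nz_1[where \<sigma>=\<sigma> and \<mu>=m] by simp

lemma nd_int_2:
  assumes s: "0 < \<sigma>"
  shows "(\<integral>t. normal_density m \<sigma> t * t ^ 2 \<partial>lborel) = m^2 + \<sigma>^2"
proof -
  have a: "has_bochner_integral lborel (\<lambda>t. normal_density m \<sigma> t * (t - m) ^ 2) (\<sigma>^2)"
    using normal_moment_even[OF s, where k=1 and \<mu>=m] by (simp add: power2_eq_square)
  have b: "has_bochner_integral lborel (\<lambda>t. normal_density m \<sigma> t * (t - m)) 0"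
    using normal_moment_odd[OF s, where k=0 and \<mu>=m] by simp
  have c: "has_bochner_integral lborel (\<lambda>t. normal_density m \<sigma> t) 1"
    using integrable_normal_density[OF s, where \<mu>=m] integral_normal_density[OF s, where \<mu>=m]
    by (metis has_bochner_integral_integrable)
  have "has_bochner_integral lborel (\<lambda>t. normal_density m \<sigma> t * (t - m) ^ 2 + 2 * m * (normal_density m \<sigma> t * (t - m)) + m^2 * normal_density m \<sigma> t) (\<sigma>^2 + 2 * m * 0 + m^2 * 1)"
    by (intro has_bochner_integral_add has_bochner_integral_mult_right a b c)
  then have "has_bochner_integral lborel (\<lambda>t. normal_density m \<sigma> t * t ^ 2) (m^2 + \<sigma>^2)"
    by (rule has_bochner_integral_cong[THEN iffD1, rotated -1]) (auto simp: power2_eq_square algebra_simps)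
  then show ?thesis by (rule has_bochner_integral_integral_eq)
qed


definition gd :: "'a::euclidean_space \<Rightarrow> real \<Rightarrow> 'a \<Rightarrow> real" where
  "gd \<mu> \<sigma> x = (\<Prod>b\<in>Basis. normal_density (\<mu> \<bullet> b) \<sigma> (x \<bullet> b))"

lemma inner_sum_Basis: "b \<in> Basis \<Longrightarrow> (\<Sum>b'\<in>Basis. f b' *\<^sub>R b') \<bullet> (b::'a::euclidean_space) = f b"
  by (simp add: inner_sum_left inner_Basis if_distrib cong: if_cong)

lemma G_prod:
  fixes \<mu> :: "'a::euclidean_space" and F :: "'a \<Rightarrow> real \<Rightarrow> real"
  assumes s: "0 < \<sigma>"
    and int: "\<And>b. b \<in> Basis \<Longrightarrow> integrable lborel (\<lambda>t. normal_density (\<mu> \<bullet> b) \<sigma> t * F b t)"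
  shows "integrable lborel (\<lambda>x::'a. gd \<mu> \<sigma> x * (\<Prod>b\<in>Basis. F b (x \<bullet> b)))"
    and "(\<integral>x. gd \<mu> \<sigma> x * (\<Prod>b\<in>Basis. F b (x \<bullet> b)) \<partial>lborel)
          = (\<Prod>b\<in>Basis. \<integral>t. normal_density (\<mu> \<bullet> b) \<sigma> t * F b t \<partial>lborel)"
proof -
  define H where "H b t = normal_density (\<mu> \<bullet> b) \<sigma> t * F b t" for b t
  have Hm: "H b \<in> borel_measurable borel" if "b \<in> Basis" for b
    using borel_measurable_integrable[OF int[OF that]] unfolding H_def by simp
  have eqf: "(\<lambda>x::'a. gd \<mu> \<sigma> x * (\<Prod>b\<in>Basis. F b (x \<bullet> b))) = (\<lambda>x. \<Prod>b\<in>Basis. H b (x \<bullet> b))"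
    by (simp add: gd_def H_def prod.distrib)
  interpret P: product_sigma_finite "\<lambda>_::'a. lborel::real measure"
    by (simp add: product_sigma_finite_def sigma_finite_lborel)
  define T where "T = (\<lambda>f. \<Sum>b\<in>Basis. f b *\<^sub>R (b::'a))"
  have Tm: "T \<in> measurable (\<Pi>\<^sub>M b\<in>Basis. (lborel::real measure)) borel"
    unfolding T_def by measurable
  have lb: "(lborel::'a measure) = distr (\<Pi>\<^sub>M b\<in>Basis. lborel) borel T"
    unfolding T_def by (rule lborel_eq)
  have gm: "(\<lambda>x::'a. \<Prod>b\<in>Basis. H b (x \<bullet> b)) \<in> borel_measurable borel"
    using Hm by (intro borel_measurable_prod) (auto intro: measurable_compose[OF borel_measurable_inner])
  have comp: "(\<Prod>b\<in>Basis. H b (T f \<bullet> b)) = (\<Prod>b\<in>Basis. H b (f b))" for f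
    unfolding T_def by (intro prod.cong refl) (simp add: inner_sum_Basis)
  have i2: "integrable (\<Pi>\<^sub>M b\<in>Basis. lborel) (\<lambda>f. \<Prod>b\<in>Basis. H b (f b))"
    using int unfolding H_def by (intro P.product_integrable_prod) auto
  show "integrable lborel (\<lambda>x::'a. gd \<mu> \<sigma> x * (\<Prod>b\<in>Basis. F b (x \<bullet> b)))"
    unfolding eqf lb
    by (subst integrable_distr_eq[OF Tm gm]) (simp add: comp i2)
  have "(\<integral>x. (\<Prod>b\<in>Basis. H b (x \<bullet> b)) \<partial>(lborel::'a measure)) = (\<integral>f. (\<Prod>b\<in>Basis. H b (T f \<bullet> b)) \<partial>(\<Pi>\<^sub>M b\<in>Basis. lborel))"
    unfolding lb by (rule integral_distr[OF Tm gm])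
  also have "\<dots> = (\<integral>f. (\<Prod>b\<in>Basis. H b (f b)) \<partial>(\<Pi>\<^sub>M b\<in>Basis. lborel))"
    by (simp add: comp)
  also have "\<dots> = (\<Prod>b\<in>Basis. integral\<^sup>L lborel (H b))"
    using int unfolding H_def by (intro P.product_integral_prod) auto
  finally show "(\<integral>x. gd \<mu> \<sigma> x * (\<Prod>b\<in>Basis. F b (x \<bullet> b)) \<partial>lborel)
          = (\<Prod>b\<in>Basis. \<integral>t. normal_density (\<mu> \<bullet> b) \<sigma> t * F b t \<partial>lborel)"
    unfolding eqf H_def .
qed


lemma G_mono:
  fixes \<mu> :: "'a::euclidean_space" and k :: "'a \<Rightarrow> nat"
  assumes s: "0 < \<sigma>"
  shows "integrable lborel (\<lambda>x::'a. gd \<mu> \<sigma> x * (\<Prod>b\<in>Basis. (x \<bullet> b) ^ k b))"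
    and "(\<integral>x. gd \<mu> \<sigma> x * (\<Prod>b\<in>Basis. (x \<bullet> b) ^ k b) \<partial>lborel)
          = (\<Prod>b\<in>Basis. \<integral>t. normal_density (\<mu> \<bullet> b) \<sigma> t * t ^ k b \<partial>lborel)"
  using G_prod[OF s, of \<mu> "\<lambda>b t. t ^ k b"] nd_int_pow[OF s] by auto

lemma G_one:
  fixes \<mu> :: "'a::euclidean_space"
  assumes s: "0 < \<sigma>"
  shows "integrable lborel (gd \<mu> \<sigma>)" "(\<integral>x. gd \<mu> \<sigma> x \<partial>lborel) = 1"
  using G_mono[OF s, of \<mu> "\<lambda>_. 0"] by (simp_all add: s)

lemma G_lin1:
  fixes \<mu> :: "'a::euclidean_space"
  assumes s: "0 < \<sigma>" and b1: "b1 \<in> Basis"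
  shows "integrable lborel (\<lambda>x. gd \<mu> \<sigma> x * (x \<bullet> b1))" "(\<integral>x. gd \<mu> \<sigma> x * (x \<bullet> b1) \<partial>lborel) = \<mu> \<bullet> b1"
proof -
  define k where "k b = (if b = b1 then 1 else 0::nat)" for b
  have e1: "(\<Prod>b\<in>Basis. (x \<bullet> b) ^ k b) = x \<bullet> b1" for x :: 'a
    unfolding k_def by (simp add: if_distrib[where f="\<lambda>n. _ ^ n"] prod.delta b1 cong: if_cong)
  have e2: "(\<Prod>b\<in>Basis. \<integral>t. normal_density (\<mu> \<bullet> b) \<sigma> t * t ^ k b \<partial>lborel) = \<mu> \<bullet> b1"
  proof -
    have "(\<Prod>b\<in>Basis. \<integral>t. normal_density (\<mu> \<bullet> b) \<sigma> t * t ^ k b \<partial>lborel)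
        = (\<Prod>b\<in>Basis. if b = b1 then \<mu> \<bullet> b else 1)"
      unfolding k_def using nd_int_1[OF s] nd_int_0[OF s]
      by (intro prod.cong refl) auto
    also have "\<dots> = \<mu> \<bullet> b1" by (simp add: b1)
    finally show ?thesis .
  qed
  show "integrable lborel (\<lambda>x. gd \<mu> \<sigma> x * (x \<bullet> b1))" "(\<integral>x. gd \<mu> \<sigma> x * (x \<bullet> b1) \<partial>lborel) = \<mu> \<bullet> b1"
    using G_mono[OF s, of \<mu> k] unfolding e1 e2 by auto
qed

lemma G_quad1:
  fixes \<mu> :: "'a::euclidean_space"
  assumes s: "0 < \<sigma>" and b1: "b1 \<in> Basis" and b2: "b2 \<in> Basis"
  shows "integrable lborel (\<lambda>x. gd \<mu> \<sigma> x * ((x \<bullet> b1) * (x \<bullet> b2)))"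
    "(\<integral>x. gd \<mu> \<sigma> x * ((x \<bullet> b1) * (x \<bullet> b2)) \<partial>lborel) = (\<mu> \<bullet> b1) * (\<mu> \<bullet> b2) + (if b1 = b2 then \<sigma>^2 else 0)"
proof -
  define k where "k b = (if b = b1 then 1 else 0::nat) + (if b = b2 then 1 else 0)" for b
  have e1: "(\<Prod>b\<in>Basis. (x \<bullet> b) ^ k b) = (x \<bullet> b1) * (x \<bullet> b2)" for x :: 'a
  proof -
    have "(\<Prod>b\<in>Basis. (x \<bullet> b) ^ k b) = (\<Prod>b\<in>Basis. (if b = b1 then x \<bullet> b else 1) * (if b = b2 then x \<bullet> b else 1))"
      unfolding k_def by (intro prod.cong refl) (simp add: power_add)
    also have "\<dots> = (x \<bullet> b1) * (x \<bullet> b2)"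
      by (simp add: prod.distrib prod.delta b1 b2)
    finally show ?thesis .
  qed
  have e2: "(\<Prod>b\<in>Basis. \<integral>t. normal_density (\<mu> \<bullet> b) \<sigma> t * t ^ k b \<partial>lborel)
      = (\<mu> \<bullet> b1) * (\<mu> \<bullet> b2) + (if b1 = b2 then \<sigma>^2 else 0)"
  proof (cases "b1 = b2")
    case True
    have "(\<Prod>b\<in>Basis. \<integral>t. normal_density (\<mu> \<bullet> b) \<sigma> t * t ^ k b \<partial>lborel)
        = (\<Prod>b\<in>Basis. if b = b1 then (\<mu> \<bullet> b)^2 + \<sigma>^2 else 1)"
      unfolding k_def using True nd_int_2[OF s] nd_int_0[OF s]
      by (intro prod.cong refl) (auto simp: numeral_2_eq_2[symmetric])
    also have "\<dots> = (\<mu> \<bullet> b1)^2 + \<sigma>^2" by (simp add: prod.delta b1)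
    finally show ?thesis using True by (simp add: power2_eq_square)
  next
    case False
    have "(\<Prod>b\<in>Basis. \<integral>t. normal_density (\<mu> \<bullet> b) \<sigma> t * t ^ k b \<partial>lborel)
        = (\<Prod>b\<in>Basis. (if b = b1 then \<mu> \<bullet> b else 1) * (if b = b2 then \<mu> \<bullet> b else 1))"
      unfolding k_def using False nd_int_1[OF s] nd_int_0[OF s]
      by (intro prod.cong refl) auto
    also have "\<dots> = (\<mu> \<bullet> b1) * (\<mu> \<bullet> b2)"
      by (simp add: prod.distrib prod.delta b1 b2)
    finally show ?thesis using False by simp
  qed
  show "integrable lborel (\<lambda>x. gd \<mu> \<sigma> x * ((x \<bullet> b1) * (x \<bullet> b2)))"
    "(\<integral>x. gd \<mu> \<sigma> x * ((x \<bullet> b1) * (x \<bullet> b2)) \<partial>lborel) = (\<mu> \<bullet> b1) * (\<mu> \<bullet> b2) + (if b1 = b2 then \<sigma>^2 else 0)"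
    using G_mono[OF s, of \<mu> k] unfolding e1 e2 by auto
qed

lemma G_lin:
  fixes \<mu> a :: "'a::euclidean_space"
  assumes s: "0 < \<sigma>"
  shows "integrable lborel (\<lambda>x. gd \<mu> \<sigma> x * (a \<bullet> x))" "(\<integral>x. gd \<mu> \<sigma> x * (a \<bullet> x) \<partial>lborel) = a \<bullet> \<mu>"
proof -
  have eq: "(\<lambda>x. gd \<mu> \<sigma> x * (a \<bullet> x)) = (\<lambda>x. \<Sum>b\<in>Basis. (a \<bullet> b) * (gd \<mu> \<sigma> x * (x \<bullet> b)))"
    by (subst euclidean_inner) (simp add: sum_distrib_left algebra_simps)
  show "integrable lborel (\<lambda>x. gd \<mu> \<sigma> x * (a \<bullet> x))"
    unfolding eq by (intro Bochner_Integration.integrable_sum integrable_mult_right G_lin1(1)[OF s]) auto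
  show "(\<integral>x. gd \<mu> \<sigma> x * (a \<bullet> x) \<partial>lborel) = a \<bullet> \<mu>"
  proof -
    have "(\<integral>x. (\<Sum>b\<in>Basis. (a \<bullet> b) * (gd \<mu> \<sigma> x * (x \<bullet> b))) \<partial>lborel)
        = (\<Sum>b\<in>Basis. \<integral>x. (a \<bullet> b) * (gd \<mu> \<sigma> x * (x \<bullet> b)) \<partial>lborel)"
      by (rule Bochner_Integration.integral_sum) (auto intro: G_lin1(1)[OF s])
    also have "\<dots> = (\<Sum>b\<in>Basis. (a \<bullet> b) * (\<mu> \<bullet> b))"
      by (intro sum.cong refl) (simp add: G_lin1[OF s])
    also have "\<dots> = a \<bullet> \<mu>" by (simp add: euclidean_inner[of a \<mu>])
    finally show ?thesis unfolding eq .
  qed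
qed

lemma G_bilin:
  fixes \<mu> a c :: "'a::euclidean_space"
  assumes s: "0 < \<sigma>"
  shows "integrable lborel (\<lambda>x. gd \<mu> \<sigma> x * ((a \<bullet> x) * (c \<bullet> x)))"
    "(\<integral>x. gd \<mu> \<sigma> x * ((a \<bullet> x) * (c \<bullet> x)) \<partial>lborel) = (a \<bullet> \<mu>) * (c \<bullet> \<mu>) + \<sigma>^2 * (a \<bullet> c)"
proof -
  have eq: "(\<lambda>x. gd \<mu> \<sigma> x * ((a \<bullet> x) * (c \<bullet> x))) =
     (\<lambda>x. \<Sum>b1\<in>Basis. \<Sum>b2\<in>Basis. ((a \<bullet> b1) * (c \<bullet> b2)) * (gd \<mu> \<sigma> x * ((x \<bullet> b1) * (x \<bullet> b2))))"
    apply (rule ext)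
    apply (subst (1 2) euclidean_inner)
    apply (subst sum_product)
    apply (subst sum_distrib_left)
    apply (intro sum.cong refl)
    apply (subst sum_distrib_left)
    apply (intro sum.cong refl)
    apply (simp add: algebra_simps)
    done
  show "integrable lborel (\<lambda>x. gd \<mu> \<sigma> x * ((a \<bullet> x) * (c \<bullet> x)))"
    unfolding eq by (intro Bochner_Integration.integrable_sum integrable_mult_right G_quad1(1)[OF s]) auto
  have "(\<integral>x. gd \<mu> \<sigma> x * ((a \<bullet> x) * (c \<bullet> x)) \<partial>lborel) =
      (\<Sum>b1\<in>Basis. \<Sum>b2\<in>Basis. ((a \<bullet> b1) * (c \<bullet> b2)) * ((\<mu> \<bullet> b1) * (\<mu> \<bullet> b2) + (if b1 = b2 then \<sigma>^2 else 0)))"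
    unfolding eq
    apply (subst Bochner_Integration.integral_sum)
    apply (intro Bochner_Integration.integrable_sum integrable_mult_right G_quad1(1)[OF s]; simp)
    apply (intro sum.cong refl)
    apply (subst Bochner_Integration.integral_sum)
    apply (intro integrable_mult_right G_quad1(1)[OF s]; simp)
    apply (intro sum.cong refl)
    apply (simp add: G_quad1[OF s])
    done
  also have "\<dots> = (\<Sum>b1\<in>Basis. (a \<bullet> b1) * (\<mu> \<bullet> b1)) * (\<Sum>b2\<in>Basis. (c \<bullet> b2) * (\<mu> \<bullet> b2))
      + \<sigma>^2 * (\<Sum>b\<in>Basis. (a \<bullet> b) * (c \<bullet> b))"
  proof -
    have "(\<Sum>b1\<in>Basis. \<Sum>b2\<in>Basis. ((a \<bullet> b1) * (c \<bullet> b2)) * ((\<mu> \<bullet> b1) * (\<mu> \<bullet> b2) + (if b1 = b2 then \<sigma>^2 else 0)))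
      = (\<Sum>b1\<in>Basis. \<Sum>b2\<in>Basis. ((a \<bullet> b1) * (\<mu> \<bullet> b1)) * ((c \<bullet> b2) * (\<mu> \<bullet> b2)) + (if b2 = b1 then \<sigma>^2 * (a \<bullet> b1) * (c \<bullet> b2) else 0))"
      by (intro sum.cong refl) (auto simp: algebra_simps)
    also have "\<dots> = (\<Sum>b1\<in>Basis. ((a \<bullet> b1) * (\<mu> \<bullet> b1)) * (\<Sum>b2\<in>Basis. (c \<bullet> b2) * (\<mu> \<bullet> b2)) + \<sigma>^2 * (a \<bullet> b1) * (c \<bullet> b1))"
      by (intro sum.cong refl) (simp add: sum.distrib sum_distrib_left)
    also have "\<dots> = (\<Sum>b1\<in>Basis. (a \<bullet> b1) * (\<mu> \<bullet> b1)) * (\<Sum>b2\<in>Basis. (c \<bullet> b2) * (\<mu> \<bullet> b2))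
      + \<sigma>^2 * (\<Sum>b\<in>Basis. (a \<bullet> b) * (c \<bullet> b))"
      by (simp only: sum.distrib sum_distrib_right sum_distrib_left[of "\<sigma>^2"] mult.assoc)
    finally show ?thesis .
  qed
  also have "\<dots> = (a \<bullet> \<mu>) * (c \<bullet> \<mu>) + \<sigma>^2 * (a \<bullet> c)"
    by (simp only: euclidean_inner[symmetric])
  finally show "(\<integral>x. gd \<mu> \<sigma> x * ((a \<bullet> x) * (c \<bullet> x)) \<partial>lborel) = (a \<bullet> \<mu>) * (c \<bullet> \<mu>) + \<sigma>^2 * (a \<bullet> c)" .
qed


lemma one_plus_sum_le_prod:
  fixes t :: "'b \<Rightarrow> real"
  assumes "finite S" "\<And>b. b \<in> S \<Longrightarrow> 0 \<le> t b"
  shows "1 + (\<Sum>b\<in>S. t b) \<le> (\<Prod>b\<in>S. 1 + t b)"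
  using assms
proof (induction S rule: finite_induct)
  case empty then show ?case by simp
next
  case (insert a S)
  have ta: "0 \<le> t a" using insert by auto
  have sS: "0 \<le> (\<Sum>b\<in>S. t b)" using insert by (auto intro: sum_nonneg)
  have IH: "1 + (\<Sum>b\<in>S. t b) \<le> (\<Prod>b\<in>S. 1 + t b)" using insert by auto
  have "1 + (\<Sum>b\<in>insert a S. t b) = 1 + t a + (\<Sum>b\<in>S. t b)" using insert by simp
  also have "\<dots> \<le> (1 + t a) * (1 + (\<Sum>b\<in>S. t b))" using ta sS by (simp add: algebra_simps)
  also have "\<dots> \<le> (1 + t a) * (\<Prod>b\<in>S. 1 + t b)" using IH ta by (intro mult_left_mono) auto
  also have "\<dots> = (\<Prod>b\<in>insert a S. 1 + t b)" using insert by simp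
  finally show ?case .
qed

lemma gd_nonneg: "0 \<le> gd \<mu> \<sigma> x"
  unfolding gd_def by (intro prod_nonneg) auto

lemma norm_sq_Basis: "(norm (x::'a::euclidean_space))^2 = (\<Sum>b\<in>Basis. (x \<bullet> b)^2)"
  unfolding power2_norm_eq_inner by (subst euclidean_inner) (simp add: power2_eq_square)

lemma G_W:
  fixes \<mu> :: "'a::euclidean_space"
  assumes s: "0 < \<sigma>"
  shows "integrable lborel (\<lambda>x. gd \<mu> \<sigma> x * (1 + (norm x)^2)^3)"
proof -
  have i1: "integrable lborel (\<lambda>t. normal_density m \<sigma> t * (1 + t^2)^3)" for m
  proof -
    have eq: "(\<lambda>t. normal_density m \<sigma> t * (1 + t^2)^3) = (\<lambda>t. normal_density m \<sigma> t * t^0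
       + 3 * (normal_density m \<sigma> t * t^2) + 3 * (normal_density m \<sigma> t * t^4) + normal_density m \<sigma> t * t^6)"
      by (rule ext) (simp add: algebra_simps power2_eq_square power3_eq_cube numeral_eq_Suc)
    show ?thesis unfolding eq
      by (intro Bochner_Integration.integrable_add integrable_mult_right nd_int_pow[OF s])
  qed
  have ip: "integrable lborel (\<lambda>x::'a. gd \<mu> \<sigma> x * (\<Prod>b\<in>Basis. (1 + (x \<bullet> b)^2)^3))"
    using G_prod(1)[OF s, of \<mu> "\<lambda>b t. (1 + t^2)^3"] i1 by auto
  show ?thesis
  proof (rule Bochner_Integration.integrable_bound[OF ip])
    show "(\<lambda>x. gd \<mu> \<sigma> x * (1 + (norm x)^2)^3) \<in> borel_measurable lborel"
      using borel_measurable_integrable[OF G_one(1)[OF s, of \<mu>]] by measurable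
    show "AE x in lborel. norm (gd \<mu> \<sigma> x * (1 + (norm x)^2)^3) \<le> norm (gd \<mu> \<sigma> x * (\<Prod>b\<in>Basis. (1 + (x \<bullet> b)^2)^3))"
    proof (rule AE_I2)
      fix x :: 'a
      have "1 + (norm x)^2 \<le> (\<Prod>b\<in>Basis. 1 + (x \<bullet> b)^2)"
        unfolding norm_sq_Basis by (rule one_plus_sum_le_prod) auto
      then have "(1 + (norm x)^2)^3 \<le> (\<Prod>b\<in>Basis. 1 + (x \<bullet> b)^2)^3"
        by (intro power_mono) auto
      also have "\<dots> = (\<Prod>b\<in>Basis. (1 + (x \<bullet> b)^2)^3)" by (rule prod_power_distrib)
      finally have le: "(1 + (norm x)^2)^3 \<le> (\<Prod>b\<in>Basis. (1 + (x \<bullet> b)^2)^3)" .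
      have p: "0 \<le> (1 + (norm x)^2)^3" by simp
      show "norm (gd \<mu> \<sigma> x * (1 + (norm x)^2)^3) \<le> norm (gd \<mu> \<sigma> x * (\<Prod>b\<in>Basis. (1 + (x \<bullet> b)^2)^3))"
        using le p gd_nonneg[of \<mu> \<sigma> x] by (simp add: abs_mult mult_left_mono)
    qed
  qed
qed

lemma G_dom:
  fixes \<mu> :: "'a::euclidean_space"
  assumes s: "0 < \<sigma>" and fm: "f \<in> borel_measurable borel"
    and fb: "\<And>x. \<bar>f x\<bar> \<le> K * (1 + (norm x)^2)^3"
  shows "integrable lborel (\<lambda>x. gd \<mu> \<sigma> x * f x)"
proof (rule Bochner_Integration.integrable_bound)
  show "integrable lborel (\<lambda>x. K * (gd \<mu> \<sigma> x * (1 + (norm x)^2)^3))"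
    using G_W[OF s, of \<mu>] by auto
  show "(\<lambda>x. gd \<mu> \<sigma> x * f x) \<in> borel_measurable lborel"
    using borel_measurable_integrable[OF G_one(1)[OF s, of \<mu>]] fm by measurable
  show "AE x in lborel. norm (gd \<mu> \<sigma> x * f x) \<le> norm (K * (gd \<mu> \<sigma> x * (1 + (norm x)^2)^3))"
  proof (rule AE_I2)
    fix x :: 'a
    have "\<bar>gd \<mu> \<sigma> x * f x\<bar> = gd \<mu> \<sigma> x * \<bar>f x\<bar>" by (simp add: abs_mult abs_of_nonneg[OF gd_nonneg])
    also have "\<dots> \<le> gd \<mu> \<sigma> x * (K * (1 + (norm x)^2)^3)" using gd_nonneg fb by (intro mult_left_mono) auto
    also have "\<dots> \<le> \<bar>K * (gd \<mu> \<sigma> x * (1 + (norm x)^2)^3)\<bar>" by (simp add: algebra_simps)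
    finally show "norm (gd \<mu> \<sigma> x * f x) \<le> norm (K * (gd \<mu> \<sigma> x * (1 + (norm x)^2)^3))" by simp
  qed
qed


lemma bool_pair_integral:
  fixes h :: "bool \<times> 'a::euclidean_space \<Rightarrow> real"
  assumes hm: "h \<in> borel_measurable (count_space UNIV \<Otimes>\<^sub>M lborel)"
    and hi: "\<And>z. integrable lborel (\<lambda>x. h (z, x))"
  shows "integrable (count_space UNIV \<Otimes>\<^sub>M lborel) h"
    "integral\<^sup>L (count_space UNIV \<Otimes>\<^sub>M lborel) h = (\<Sum>z\<in>UNIV. \<integral>x. h (z, x) \<partial>lborel)"
proof -
  interpret P: pair_sigma_finite "count_space (UNIV::bool set)" "lborel::'a measure"
    by (intro pair_sigma_finite.intro sigma_finite_measure_count_space_finite) (auto simp: lborel.sigma_finite_measure_axioms)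
  have "(\<integral>\<^sup>+ p. ennreal (norm (h p)) \<partial>(count_space UNIV \<Otimes>\<^sub>M lborel)) = (\<integral>\<^sup>+ z. \<integral>\<^sup>+ x. ennreal (norm (h (z, x))) \<partial>lborel \<partial>count_space UNIV)"
    using hm by (subst lborel.nn_integral_fst[symmetric]) auto
  also have "\<dots> = (\<Sum>z\<in>UNIV. \<integral>\<^sup>+ x. ennreal (norm (h (z, x))) \<partial>lborel)"
    by (rule nn_integral_count_space_finite) simp
  also have "\<dots> < \<infinity>"
    using hi unfolding integrable_iff_bounded by (simp add: less_top[symmetric])
  finally show hI: "integrable (count_space UNIV \<Otimes>\<^sub>M lborel) h"
    unfolding integrable_iff_bounded using hm by simp
  have "integral\<^sup>L (count_space UNIV \<Otimes>\<^sub>M lborel) h = (\<integral>z. \<integral>x. h (z, x) \<partial>lborel \<partial>count_space UNIV)"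
    by (rule P.integral_fst'[OF hI, symmetric])
  also have "\<dots> = (\<Sum>z\<in>UNIV. \<integral>x. h (z, x) \<partial>lborel)"
    by (rule lebesgue_integral_count_space_finite) simp
  finally show "integral\<^sup>L (count_space UNIV \<Otimes>\<^sub>M lborel) h = (\<Sum>z\<in>UNIV. \<integral>x. h (z, x) \<partial>lborel)" .
qed

lemma Basis_vec_range: "(Basis :: (real^'n) set) = range (\<lambda>i. axis i 1)"
  by (auto simp: Basis_vec_def)

lemma gauss_gd: "gauss_density (\<mu>::real^'n) \<sigma> x = gd \<mu> \<sigma> x"
proof -
  have inj: "inj (\<lambda>i::'n. axis i (1::real))" by (auto intro: injI simp: axis_eq_axis)
  have "gd \<mu> \<sigma> x = (\<Prod>i\<in>UNIV. normal_density (\<mu> \<bullet> axis i 1) \<sigma> (x \<bullet> axis i 1))"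
    unfolding gd_def Basis_vec_range by (subst prod.reindex[OF inj]) (simp add: comp_def)
  also have "\<dots> = gauss_density \<mu> \<sigma> x"
    unfolding gauss_density_def by (simp add: inner_axis)
  finally show ?thesis by simp
qed


lemma meas_bool_pair:
  fixes f :: "bool \<times> 'a::euclidean_space \<Rightarrow> real"
  assumes "\<And>z. (\<lambda>x. f (z, x)) \<in> borel_measurable borel"
  shows "f \<in> borel_measurable (count_space UNIV \<Otimes>\<^sub>M lborel)"
  by (rule measurable_pair_measure_countable1) (use assms in auto)

locale setting =
  fixes \<mu>0 \<mu>1 :: "real^'n" and \<sigma> :: real
  assumes s: "0 < \<sigma>" and n0: "norm \<mu>0 = 1" and n1: "norm \<mu>1 = 1" and orth: "\<mu>0 \<bullet> \<mu>1 = 0"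
begin

definition mu :: "bool \<Rightarrow> real^'n" where "mu c = (if c then \<mu>1 else \<mu>0)"

abbreviation M where "M \<equiv> sample_M \<mu>0 \<mu>1 \<sigma>"

definition W :: "bool \<times> (real^'n) \<Rightarrow> real" where "W p = (1 + (norm (snd p))^2)^3"

definition Q :: "real^'n \<Rightarrow> real^'n \<Rightarrow> real" where
  "Q a b = ((a \<bullet> \<mu>0) * (b \<bullet> \<mu>0) + (a \<bullet> \<mu>1) * (b \<bullet> \<mu>1)) / 2 + \<sigma>^2 * (a \<bullet> b)"

lemma gd_meas[measurable]: "gd m \<sigma> \<in> borel_measurable borel"
  using borel_measurable_integrable[OF G_one(1)[OF s, of m]] by simp

lemma M_density: "M = density (count_space UNIV \<Otimes>\<^sub>M lborel) (\<lambda>p. ennreal (1/2 * gd (mu (fst p)) \<sigma> (snd p)))"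
  unfolding sample_M_def mu_def
  by (intro arg_cong[where f="density _"] ext) (auto simp: gauss_gd split: prod.split)

lemma sets_M[measurable_cong]: "sets M = sets (count_space UNIV \<Otimes>\<^sub>M lborel)"
  unfolding M_density by simp

lemma M_integral:
  fixes f :: "bool \<times> (real^'n) \<Rightarrow> real"
  assumes fm: "f \<in> borel_measurable (count_space UNIV \<Otimes>\<^sub>M lborel)"
    and fi: "\<And>z. integrable lborel (\<lambda>x. gd (mu z) \<sigma> x * f (z, x))"
  shows "integrable M f" "integral\<^sup>L M f = (\<Sum>z\<in>UNIV. \<integral>x. gd (mu z) \<sigma> x * f (z, x) \<partial>lborel) / 2"
proof -
  define g where "g p = 1/2 * gd (mu (fst p)) \<sigma> (snd p)" for p :: "bool \<times> (real^'n)"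
  have gm: "g \<in> borel_measurable (count_space UNIV \<Otimes>\<^sub>M lborel)"
    unfolding g_def by (rule meas_bool_pair) simp
  have gnn: "AE p in count_space UNIV \<Otimes>\<^sub>M lborel. 0 \<le> g p"
    by (rule AE_I2) (simp add: g_def gd_nonneg)
  have Md: "M = density (count_space UNIV \<Otimes>\<^sub>M lborel) g"
    unfolding M_density g_def ..
  have hm: "(\<lambda>p. g p *\<^sub>R f p) \<in> borel_measurable (count_space UNIV \<Otimes>\<^sub>M lborel)"
    using gm fm by measurable
  have hi: "integrable lborel (\<lambda>x. g (z, x) *\<^sub>R f (z, x))" for z
    using fi[of z] by (simp add: g_def mult.assoc)
  note bp = bool_pair_integral[OF hm hi]
  show "integrable M f"
    unfolding Md by (subst integrable_density[OF fm gm gnn]) (rule bp(1))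
  have "integral\<^sup>L M f = integral\<^sup>L (count_space UNIV \<Otimes>\<^sub>M lborel) (\<lambda>p. g p *\<^sub>R f p)"
    unfolding Md by (rule integral_density[OF fm gm gnn])
  also have "\<dots> = (\<Sum>z\<in>UNIV. \<integral>x. g (z, x) *\<^sub>R f (z, x) \<partial>lborel)" by (rule bp(2))
  also have "\<dots> = (\<Sum>z\<in>UNIV. \<integral>x. gd (mu z) \<sigma> x * f (z, x) \<partial>lborel) / 2"
    by (simp add: g_def mult.assoc sum_divide_distrib)
  finally show "integral\<^sup>L M f = (\<Sum>z\<in>UNIV. \<integral>x. gd (mu z) \<sigma> x * f (z, x) \<partial>lborel) / 2" .
qed

lemma M_dom:
  fixes f :: "bool \<times> (real^'n) \<Rightarrow> real"
  assumes fm: "\<And>z. (\<lambda>x. f (z, x)) \<in> borel_measurable borel"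
    and fb: "\<And>p. \<bar>f p\<bar> \<le> K * W p"
  shows "integrable M f"
proof (rule M_integral(1))
  show "f \<in> borel_measurable (count_space UNIV \<Otimes>\<^sub>M lborel)" by (rule meas_bool_pair[OF fm])
  show "integrable lborel (\<lambda>x. gd (mu z) \<sigma> x * f (z, x))" for z
    by (rule G_dom[OF s fm]) (use fb[of "(z, _)"] in \<open>simp add: W_def\<close>)
qed

lemma prob_M: "prob_space M"
proof -
  have mm: "(\<lambda>_. 1::real) \<in> borel_measurable (count_space UNIV \<Otimes>\<^sub>M lborel)" by simp
  have i: "integrable lborel (\<lambda>x. gd (mu z) \<sigma> x * 1)" for z using G_one[OF s] by simp
  have I: "integrable M (\<lambda>_. 1::real)" by (rule M_integral(1)[OF mm i])
  have v: "integral\<^sup>L M (\<lambda>_. 1::real) = 1"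
    using M_integral(2)[OF mm i] by (simp add: UNIV_bool G_one(2)[OF s])
  have fin: "emeasure M (space M) < \<infinity>"
    using I by (simp add: integrable_iff_bounded)
  have "measure M (space M) = 1" using v by simp
  then have "emeasure M (space M) = 1"
    using fin by (simp add: emeasure_eq_ennreal_measure less_top)
  then show ?thesis by (rule prob_spaceI)
qed

end


context setting begin

lemma prodPS: "product_prob_space (\<lambda>_::nat. M)"
  using prob_M by (simp add: product_prob_space_def product_sigma_finite_def product_prob_space_axioms_def prob_space_imp_sigma_finite)

lemma snd_meas_M: "snd \<in> measurable M borel"
  by (simp add: measurable_cong_sets[OF sets_M refl])

lemma fst_meas_M: "fst \<in> measurable M (count_space UNIV)"
  by (simp add: measurable_cong_sets[OF sets_M refl])

lemma meas_snd: "k \<in> I \<Longrightarrow> (\<lambda>\<omega>. snd (\<omega> k)) \<in> measurable (PiM I (\<lambda>_. M)) borel"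
  by (rule measurable_compose[where f="\<lambda>\<omega>. \<omega> k", OF measurable_component_singleton snd_meas_M])

lemma meas_fst: "k \<in> I \<Longrightarrow> (\<lambda>\<omega>. fst (\<omega> k)) \<in> measurable (PiM I (\<lambda>_. M)) (count_space UNIV)"
  by (rule measurable_compose[where f="\<lambda>\<omega>. \<omega> k", OF measurable_component_singleton fst_meas_M])

end


context setting begin

definition ind :: "bool \<Rightarrow> bool \<times> (real^'n) \<Rightarrow> real" where
  "ind c p = (if fst p = c then 1 else 0)"

lemma M_full:
  fixes g :: "real^'n \<Rightarrow> real"
  assumes gm: "g \<in> borel_measurable borel" and gi: "\<And>z. integrable lborel (\<lambda>x. gd (mu z) \<sigma> x * g x)"
  shows "integrable M (\<lambda>p. g (snd p))"
    "(\<integral>p. g (snd p) \<partial>M) = ((\<integral>x. gd \<mu>0 \<sigma> x * g x \<partial>lborel) + (\<integral>x. gd \<mu>1 \<sigma> x * g x \<partial>lborel)) / 2"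
proof -
  have fm: "(\<lambda>p::bool \<times> (real^'n). g (snd p)) \<in> borel_measurable (count_space UNIV \<Otimes>\<^sub>M lborel)"
    by (rule meas_bool_pair) (simp add: gm)
  show "integrable M (\<lambda>p. g (snd p))" using M_integral(1)[OF fm] gi by simp
  show "(\<integral>p. g (snd p) \<partial>M) = ((\<integral>x. gd \<mu>0 \<sigma> x * g x \<partial>lborel) + (\<integral>x. gd \<mu>1 \<sigma> x * g x \<partial>lborel)) / 2"
    using M_integral(2)[OF fm] gi by (simp add: UNIV_bool mu_def add.commute)
qed

lemma M_ind:
  fixes g :: "real^'n \<Rightarrow> real"
  assumes gm: "g \<in> borel_measurable borel" and gi: "integrable lborel (\<lambda>x. gd (mu c) \<sigma> x * g x)"
  shows "integrable M (\<lambda>p. ind c p * g (snd p))"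
    "(\<integral>p. ind c p * g (snd p) \<partial>M) = (\<integral>x. gd (mu c) \<sigma> x * g x \<partial>lborel) / 2"
proof -
  have fm: "(\<lambda>p. ind c p * g (snd p)) \<in> borel_measurable (count_space UNIV \<Otimes>\<^sub>M lborel)"
    by (rule meas_bool_pair) (simp add: gm ind_def)
  have sl: "(\<lambda>x. gd (mu z) \<sigma> x * (ind c (z, x) * g x)) = (\<lambda>x. if z = c then gd (mu c) \<sigma> x * g x else 0)" for z
    by (auto simp: ind_def)
  have gi': "integrable lborel (\<lambda>x. gd (mu z) \<sigma> x * (ind c (z, x) * g x))" for z
    unfolding sl using gi by (cases "z = c") auto
  show "integrable M (\<lambda>p. ind c p * g (snd p))" using M_integral(1)[OF fm] gi' by simp
  have "(\<integral>p. ind c p * g (snd p) \<partial>M) = (\<Sum>z\<in>UNIV. \<integral>x. gd (mu z) \<sigma> x * (ind c (z, x) * g x) \<partial>lborel) / 2"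
    using M_integral(2)[OF fm] gi' by simp
  also have "\<dots> = (\<Sum>z\<in>UNIV. \<integral>x. (if z = c then gd (mu c) \<sigma> x * g x else 0) \<partial>lborel) / 2"
    unfolding sl ..
  also have "\<dots> = (\<integral>x. gd (mu c) \<sigma> x * g x \<partial>lborel) / 2"
    by (cases c) (simp_all add: UNIV_bool)
  finally show "(\<integral>p. ind c p * g (snd p) \<partial>M) = (\<integral>x. gd (mu c) \<sigma> x * g x \<partial>lborel) / 2" .
qed

lemma M_c0: "integrable M (ind c)" "(\<integral>p. ind c p \<partial>M) = 1/2"
proof -
  have i: "integrable lborel (\<lambda>x. gd (mu c) \<sigma> x * 1)" using G_one(1)[OF s] by simp
  note r = M_ind[of "\<lambda>_. 1" c, OF _ i]
  show "integrable M (ind c)" using r(1) by simp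
  show "(\<integral>p. ind c p \<partial>M) = 1/2" using r(2) G_one(2)[OF s] by simp
qed

lemma M_c1: "integrable M (\<lambda>p. ind c p * (a \<bullet> snd p))" "(\<integral>p. ind c p * (a \<bullet> snd p) \<partial>M) = (a \<bullet> mu c) / 2"
proof -
  note r = M_ind[of "\<lambda>x. a \<bullet> x" c, OF _ G_lin(1)[OF s]]
  show "integrable M (\<lambda>p. ind c p * (a \<bullet> snd p))" using r(1) by simp
  show "(\<integral>p. ind c p * (a \<bullet> snd p) \<partial>M) = (a \<bullet> mu c) / 2" using r(2) G_lin(2)[OF s] by simp
qed

lemma M_c2: "integrable M (\<lambda>p. ind c p * ((a \<bullet> snd p) * (b \<bullet> snd p)))"
  "(\<integral>p. ind c p * ((a \<bullet> snd p) * (b \<bullet> snd p)) \<partial>M) = ((a \<bullet> mu c) * (b \<bullet> mu c) + \<sigma>^2 * (a \<bullet> b)) / 2"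
proof -
  note r = M_ind[of "\<lambda>x. (a \<bullet> x) * (b \<bullet> x)" c, OF _ G_bilin(1)[OF s]]
  show "integrable M (\<lambda>p. ind c p * ((a \<bullet> snd p) * (b \<bullet> snd p)))" using r(1) by simp
  show "(\<integral>p. ind c p * ((a \<bullet> snd p) * (b \<bullet> snd p)) \<partial>M) = ((a \<bullet> mu c) * (b \<bullet> mu c) + \<sigma>^2 * (a \<bullet> b)) / 2"
    using r(2) G_bilin(2)[OF s] by simp
qed

lemma M_2: "integrable M (\<lambda>p. (a \<bullet> snd p) * (b \<bullet> snd p))"
  "(\<integral>p. (a \<bullet> snd p) * (b \<bullet> snd p) \<partial>M) = Q a b"
proof -
  note r = M_full[of "\<lambda>x. (a \<bullet> x) * (b \<bullet> x)", OF _ G_bilin(1)[OF s]]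
  show "integrable M (\<lambda>p. (a \<bullet> snd p) * (b \<bullet> snd p))" using r(1) by simp
  show "(\<integral>p. (a \<bullet> snd p) * (b \<bullet> snd p) \<partial>M) = Q a b"
    using r(2)[unfolded G_bilin(2)[OF s]] by (simp add: Q_def field_simps)
qed

lemma M_Wi: "integrable M W"
  by (rule M_dom[where K=1]) (auto simp: W_def)

lemma mu_inner: "mu c \<bullet> mu c' = (if c = c' then 1 else 0)"
proof -
  have "\<mu>0 \<bullet> \<mu>0 = 1" using n0 by (simp add: power2_norm_eq_inner[symmetric])
  moreover have "\<mu>1 \<bullet> \<mu>1 = 1" using n1 by (simp add: power2_norm_eq_inner[symmetric])
  moreover have "\<mu>1 \<bullet> \<mu>0 = 0" using orth by (simp add: inner_commute)
  ultimately show ?thesis using orth unfolding mu_def by auto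
qed

lemma Q_mu: "Q (mu c) b = (1/2 + \<sigma>^2) * (mu c \<bullet> b)"
proof -
  have "Q (mu c) b = ((mu c \<bullet> mu False) * (b \<bullet> mu False) + (mu c \<bullet> mu True) * (b \<bullet> mu True)) / 2 + \<sigma>^2 * (mu c \<bullet> b)"
    unfolding Q_def mu_def by simp
  also have "\<dots> = (1/2 + \<sigma>^2) * (mu c \<bullet> b)"
    by (cases c) (simp_all add: mu_inner inner_commute field_simps)
  finally show ?thesis .
qed

lemma sum_Basis_mu: "(\<Sum>b\<in>Basis. (mu c \<bullet> b) * (mu c' \<bullet> b)) = mu c \<bullet> mu c'"
  by (simp only: euclidean_inner[symmetric])

lemma M_nsq: "integrable M (\<lambda>p. (norm (snd p))^2)" "(\<integral>p. (norm (snd p))^2 \<partial>M) = 1 + real CARD('n) * \<sigma>^2"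
proof -
  have eq: "(\<lambda>p. (norm (snd p))^2) = (\<lambda>p. \<Sum>b\<in>Basis. (b \<bullet> snd p) * (b \<bullet> snd p))"
    by (rule ext, subst norm_sq_Basis) (simp add: power2_eq_square inner_commute)
  show "integrable M (\<lambda>p. (norm (snd p))^2)" unfolding eq
    by (intro Bochner_Integration.integrable_sum M_2(1))
  have "(\<integral>p. (norm (snd p))^2 \<partial>M) = (\<Sum>b\<in>(Basis::(real^'n) set). Q b b)"
    unfolding eq by (subst Bochner_Integration.integral_sum) (auto intro: M_2(1) simp: M_2(2))
  also have "\<dots> = (\<Sum>b\<in>(Basis::(real^'n) set). ((b \<bullet> \<mu>0) * (b \<bullet> \<mu>0) + (b \<bullet> \<mu>1) * (b \<bullet> \<mu>1)) / 2) + real DIM(real^'n) * \<sigma>^2"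
    unfolding Q_def by (simp add: sum.distrib)
  also have "\<dots> = (\<mu>0 \<bullet> \<mu>0 + \<mu>1 \<bullet> \<mu>1) / 2 + real CARD('n) * \<sigma>^2"
    by (simp add: sum_divide_distrib[symmetric] sum.distrib euclidean_inner[of \<mu>0 \<mu>0] euclidean_inner[of \<mu>1 \<mu>1] inner_commute)
  also have "\<dots> = 1 + real CARD('n) * \<sigma>^2"
    using mu_inner[of False False] mu_inner[of True True] by (simp add: mu_def)
  finally show "(\<integral>p. (norm (snd p))^2 \<partial>M) = 1 + real CARD('n) * \<sigma>^2" .
qed

end


context setting begin

lemma Pi_prod:
  fixes f :: "nat \<Rightarrow> bool \<times> (real^'n) \<Rightarrow> real"
  assumes I: "finite I" "J \<subseteq> I" and fi: "\<And>j. j \<in> J \<Longrightarrow> integrable M (f j)"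
  shows "integrable (PiM I (\<lambda>_. M)) (\<lambda>\<omega>. \<Prod>j\<in>J. f j (\<omega> j))"
    "(\<integral>\<omega>. (\<Prod>j\<in>J. f j (\<omega> j)) \<partial>PiM I (\<lambda>_. M)) = (\<Prod>j\<in>J. integral\<^sup>L M (f j))"
proof -
  interpret PP: product_prob_space "\<lambda>_::nat. M" by (rule prodPS)
  interpret PM: prob_space M by (rule prob_M)
  define F where "F i = (if i \<in> J then f i else (\<lambda>_. 1))" for i
  have JI: "finite J" using I finite_subset by auto
  have eq: "(\<Prod>i\<in>I. F i (\<omega> i)) = (\<Prod>j\<in>J. f j (\<omega> j))" for \<omega>
  proof -
    have "(\<Prod>i\<in>I. F i (\<omega> i)) = (\<Prod>i\<in>J. F i (\<omega> i))"
      using I by (intro prod.mono_neutral_right) (auto simp: F_def)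
    also have "\<dots> = (\<Prod>j\<in>J. f j (\<omega> j))" by (intro prod.cong) (auto simp: F_def)
    finally show ?thesis .
  qed
  have Fi: "integrable M (F i)" if "i \<in> I" for i
    using fi by (auto simp: F_def)
  show "integrable (PiM I (\<lambda>_. M)) (\<lambda>\<omega>. \<Prod>j\<in>J. f j (\<omega> j))"
  proof -
    have "integrable (PiM I (\<lambda>_. M)) (\<lambda>\<omega>. \<Prod>i\<in>I. F i (\<omega> i))"
      by (rule PP.product_integrable_prod) (auto intro: Fi simp: I)
    then show ?thesis unfolding eq .
  qed
  have "(\<integral>\<omega>. (\<Prod>j\<in>J. f j (\<omega> j)) \<partial>PiM I (\<lambda>_. M)) = (\<integral>\<omega>. (\<Prod>i\<in>I. F i (\<omega> i)) \<partial>PiM I (\<lambda>_. M))"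
    unfolding eq ..
  also have "\<dots> = (\<Prod>i\<in>I. integral\<^sup>L M (F i))"
    by (rule PP.product_integral_prod) (auto intro: Fi simp: I)
  also have "\<dots> = (\<Prod>i\<in>J. integral\<^sup>L M (F i))"
    using I by (intro prod.mono_neutral_right) (auto simp: F_def prob_space.prob_space[OF prob_M])
  also have "\<dots> = (\<Prod>j\<in>J. integral\<^sup>L M (f j))" by (intro prod.cong) (auto simp: F_def)
  finally show "(\<integral>\<omega>. (\<Prod>j\<in>J. f j (\<omega> j)) \<partial>PiM I (\<lambda>_. M)) = (\<Prod>j\<in>J. integral\<^sup>L M (f j))" .
qed

lemma E1:
  fixes I :: "nat set" and f g h :: "bool \<times> (real^'n) \<Rightarrow> real"
  assumes I: "finite I" "a \<in> I" and fi: "integrable M f"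
  shows "integrable (PiM I (\<lambda>_. M)) (\<lambda>\<omega>. f (\<omega> a))"
    "(\<integral>\<omega>. f (\<omega> a) \<partial>PiM I (\<lambda>_. M)) = integral\<^sup>L M f"
  using Pi_prod[of I "{a}" "\<lambda>_. f"] I fi by auto

lemma E2:
  fixes I :: "nat set" and f g h :: "bool \<times> (real^'n) \<Rightarrow> real"
  assumes I: "finite I" "a \<in> I" "b \<in> I" "a \<noteq> b" and fi: "integrable M f" "integrable M g"
  shows "integrable (PiM I (\<lambda>_. M)) (\<lambda>\<omega>. f (\<omega> a) * g (\<omega> b))"
    "(\<integral>\<omega>. f (\<omega> a) * g (\<omega> b) \<partial>PiM I (\<lambda>_. M)) = integral\<^sup>L M f * integral\<^sup>L M g"
proof -
  define h where "h j = (if j = a then f else g)" for j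
  have e: "(\<Prod>j\<in>{a, b}. h j (\<omega> j)) = f (\<omega> a) * g (\<omega> b)" for \<omega>
    using I by (simp add: h_def)
  have e2: "(\<Prod>j\<in>{a, b}. integral\<^sup>L M (h j)) = integral\<^sup>L M f * integral\<^sup>L M g"
    using I by (simp add: h_def)
  note r = Pi_prod[of I "{a, b}" h]
  show "integrable (PiM I (\<lambda>_. M)) (\<lambda>\<omega>. f (\<omega> a) * g (\<omega> b))"
    using r(1) I fi unfolding e by (auto simp: h_def)
  show "(\<integral>\<omega>. f (\<omega> a) * g (\<omega> b) \<partial>PiM I (\<lambda>_. M)) = integral\<^sup>L M f * integral\<^sup>L M g"
    using r(2) I fi unfolding e e2 by (auto simp: h_def)
qed

lemma E3:
  fixes I :: "nat set" and f g h :: "bool \<times> (real^'n) \<Rightarrow> real"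
  assumes I: "finite I" "a \<in> I" "b \<in> I" "c \<in> I" "a \<noteq> b" "a \<noteq> c" "b \<noteq> c"
    and fi: "integrable M f" "integrable M g" "integrable M h"
  shows "integrable (PiM I (\<lambda>_. M)) (\<lambda>\<omega>. f (\<omega> a) * g (\<omega> b) * h (\<omega> c))"
    "(\<integral>\<omega>. f (\<omega> a) * g (\<omega> b) * h (\<omega> c) \<partial>PiM I (\<lambda>_. M)) = integral\<^sup>L M f * integral\<^sup>L M g * integral\<^sup>L M h"
proof -
  define k where "k j = (if j = a then f else if j = b then g else h)" for j
  have e: "(\<Prod>j\<in>{a, b, c}. k j (\<omega> j)) = f (\<omega> a) * g (\<omega> b) * h (\<omega> c)" for \<omega>
    using I by (simp add: k_def)
  have e2: "(\<Prod>j\<in>{a, b, c}. integral\<^sup>L M (k j)) = integral\<^sup>L M f * integral\<^sup>L M g * integral\<^sup>L M h"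
    using I by (simp add: k_def)
  note r = Pi_prod[of I "{a, b, c}" k]
  show "integrable (PiM I (\<lambda>_. M)) (\<lambda>\<omega>. f (\<omega> a) * g (\<omega> b) * h (\<omega> c))"
    using r(1) I fi unfolding e by (auto simp: k_def)
  show "(\<integral>\<omega>. f (\<omega> a) * g (\<omega> b) * h (\<omega> c) \<partial>PiM I (\<lambda>_. M)) = integral\<^sup>L M f * integral\<^sup>L M g * integral\<^sup>L M h"
    using r(2) I fi unfolding e e2 by (auto simp: k_def)
qed

lemma E2sum:
  fixes I :: "nat set" and A B :: "'s \<Rightarrow> bool \<times> (real^'n) \<Rightarrow> real"
  assumes I: "finite I" "a \<in> I" "b \<in> I" "a \<noteq> b" and S: "finite S"
    and fi: "\<And>i. integrable M (A i)" "\<And>i. integrable M (B i)"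
  shows "integrable (PiM I (\<lambda>_. M)) (\<lambda>\<omega>. \<Sum>i\<in>S. A i (\<omega> a) * B i (\<omega> b))"
    "(\<integral>\<omega>. (\<Sum>i\<in>S. A i (\<omega> a) * B i (\<omega> b)) \<partial>PiM I (\<lambda>_. M)) = (\<Sum>i\<in>S. integral\<^sup>L M (A i) * integral\<^sup>L M (B i))"
  using E2[OF I fi(1) fi(2)]
  by (auto intro!: Bochner_Integration.integrable_sum simp: Bochner_Integration.integral_sum)

lemma E3sum:
  fixes I :: "nat set" and A B C :: "'s \<Rightarrow> bool \<times> (real^'n) \<Rightarrow> real"
  assumes I: "finite I" "a \<in> I" "b \<in> I" "c \<in> I" "a \<noteq> b" "a \<noteq> c" "b \<noteq> c" and S: "finite S"
    and fi: "\<And>i. integrable M (A i)" "\<And>i. integrable M (B i)" "\<And>i. integrable M (C i)"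
  shows "integrable (PiM I (\<lambda>_. M)) (\<lambda>\<omega>. \<Sum>i\<in>S. A i (\<omega> a) * B i (\<omega> b) * C i (\<omega> c))"
    "(\<integral>\<omega>. (\<Sum>i\<in>S. A i (\<omega> a) * B i (\<omega> b) * C i (\<omega> c)) \<partial>PiM I (\<lambda>_. M)) = (\<Sum>i\<in>S. integral\<^sup>L M (A i) * integral\<^sup>L M (B i) * integral\<^sup>L M (C i))"
  using E3[OF I fi(1) fi(2) fi(3)]
  by (auto intro!: Bochner_Integration.integrable_sum simp: Bochner_Integration.integral_sum)

end


lemma sum_prod_split: "finite A \<Longrightarrow> finite B \<Longrightarrow> sum f (A \<times> B) = (\<Sum>a\<in>A. \<Sum>b\<in>B. f (a, b))"
  by (subst sum.cartesian_product) simp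

context setting begin

definition pr :: "real^'n \<Rightarrow> real^'n \<Rightarrow> real" where
  "pr y u = (\<Sum>c\<in>UNIV. (mu c \<bullet> y) * (mu c \<bullet> u))"

lemma pr_expl: "pr y u = (y \<bullet> \<mu>0) * (\<mu>0 \<bullet> u) + (y \<bullet> \<mu>1) * (\<mu>1 \<bullet> u)"
  by (simp add: pr_def UNIV_bool mu_def inner_commute)

lemma inner_Basis_sum: "(y::real^'n) \<bullet> u = (\<Sum>b\<in>Basis. (b \<bullet> y) * (b \<bullet> u))"
  by (subst euclidean_inner) (simp add: inner_commute)

lemma Gg_exp: "pr y u * (y \<bullet> u) = (\<Sum>i\<in>UNIV \<times> Basis. ((mu (fst i) \<bullet> y) * (snd i \<bullet> y)) * ((mu (fst i) \<bullet> u) * (snd i \<bullet> u)))"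
proof -
  have "pr y u * (y \<bullet> u) = (\<Sum>c\<in>UNIV. \<Sum>b\<in>Basis. ((mu c \<bullet> y) * (mu c \<bullet> u)) * ((b \<bullet> y) * (b \<bullet> u)))"
    unfolding pr_def inner_Basis_sum[of y u] by (rule sum_product)
  also have "\<dots> = (\<Sum>i\<in>UNIV \<times> Basis. ((mu (fst i) \<bullet> y) * (snd i \<bullet> y)) * ((mu (fst i) \<bullet> u) * (snd i \<bullet> u)))"
    by (subst sum_prod_split) (auto simp: algebra_simps)
  finally show ?thesis .
qed

lemma Hh_exp: "pr y u * pr y v * (u \<bullet> v) = (\<Sum>i\<in>Basis \<times> UNIV \<times> UNIV.
     ((mu (fst (snd i)) \<bullet> y) * (mu (snd (snd i)) \<bullet> y)) * ((mu (fst (snd i)) \<bullet> u) * (fst i \<bullet> u)) * ((mu (snd (snd i)) \<bullet> v) * (fst i \<bullet> v)))"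
proof -
  have "pr y u * pr y v * (u \<bullet> v) = (\<Sum>b\<in>Basis. \<Sum>c\<in>UNIV. \<Sum>c'\<in>UNIV.
     ((mu c \<bullet> y) * (mu c \<bullet> u)) * ((mu c' \<bullet> y) * (mu c' \<bullet> v)) * ((b \<bullet> u) * (b \<bullet> v)))"
  proof -
    have "pr y u * pr y v = (\<Sum>c\<in>UNIV. \<Sum>c'\<in>UNIV. ((mu c \<bullet> y) * (mu c \<bullet> u)) * ((mu c' \<bullet> y) * (mu c' \<bullet> v)))"
      unfolding pr_def by (rule sum_product)
    then have "pr y u * pr y v * (u \<bullet> v) = (\<Sum>c\<in>UNIV. \<Sum>c'\<in>UNIV. ((mu c \<bullet> y) * (mu c \<bullet> u)) * ((mu c' \<bullet> y) * (mu c' \<bullet> v)))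
        * (\<Sum>b\<in>Basis. (b \<bullet> u) * (b \<bullet> v))"
      by (simp only: inner_Basis_sum[of u v])
    then show ?thesis by (simp only: sum_distrib_right sum_distrib_left)
  qed
  also have "\<dots> = (\<Sum>i\<in>Basis \<times> UNIV \<times> UNIV.
     ((mu (fst (snd i)) \<bullet> y) * (mu (snd (snd i)) \<bullet> y)) * ((mu (fst (snd i)) \<bullet> u) * (fst i \<bullet> u)) * ((mu (snd (snd i)) \<bullet> v) * (fst i \<bullet> v)))"
    apply (subst sum_prod_split, simp, simp)
    apply (intro sum.cong refl)
    apply (subst sum_prod_split, simp, simp)
    apply (simp add: algebra_simps)
    done
  finally show ?thesis .
qed

lemma sum_mu_sq: "(\<Sum>b\<in>Basis. (mu c \<bullet> b) * (mu c' \<bullet> b)) = (if c = c' then 1 else 0)"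
  using sum_Basis_mu mu_inner by simp

end


lemma sum_if_eq_bool: "(\<Sum>c'\<in>(UNIV::bool set). (if c = c' then 1 else 0) * (g c' :: real)) = g c"
  by (cases c) (simp_all add: UNIV_bool)

context setting begin

lemma GEN_g:
  fixes I :: "nat set"
  assumes I: "finite I" "a \<in> I" "b \<in> I" "a \<noteq> b"
  shows "integrable (PiM I (\<lambda>_. M)) (\<lambda>\<omega>. pr (snd (\<omega> a)) (snd (\<omega> b)) * (snd (\<omega> a) \<bullet> snd (\<omega> b)))"
    "(\<integral>\<omega>. pr (snd (\<omega> a)) (snd (\<omega> b)) * (snd (\<omega> a) \<bullet> snd (\<omega> b)) \<partial>PiM I (\<lambda>_. M)) = 2 * (1/2 + \<sigma>^2)^2"
proof -
  define A where "A i p = (mu (fst i) \<bullet> snd p) * (snd i \<bullet> snd p)" for i :: "bool \<times> (real^'n)" and p :: "bool \<times> (real^'n)"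
  have eq: "(\<lambda>\<omega>. pr (snd (\<omega> a)) (snd (\<omega> b)) * (snd (\<omega> a) \<bullet> snd (\<omega> b))) =
      (\<lambda>\<omega>. \<Sum>i\<in>UNIV \<times> Basis. A i (\<omega> a) * A i (\<omega> b))"
    unfolding A_def by (subst Gg_exp) simp
  have Ai: "integrable M (A i)" for i unfolding A_def by (rule M_2(1))
  have Av: "integral\<^sup>L M (A i) = (1/2 + \<sigma>^2) * (mu (fst i) \<bullet> snd i)" for i
    unfolding A_def by (simp add: M_2(2) Q_mu)
  note r = E2sum[where A=A and B=A and S="UNIV \<times> Basis", OF I _ Ai Ai]
  show "integrable (PiM I (\<lambda>_. M)) (\<lambda>\<omega>. pr (snd (\<omega> a)) (snd (\<omega> b)) * (snd (\<omega> a) \<bullet> snd (\<omega> b)))"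
    unfolding eq using r(1) by simp
  have "(\<integral>\<omega>. pr (snd (\<omega> a)) (snd (\<omega> b)) * (snd (\<omega> a) \<bullet> snd (\<omega> b)) \<partial>PiM I (\<lambda>_. M))
      = (\<Sum>i\<in>UNIV \<times> Basis. ((1/2 + \<sigma>^2) * (mu (fst i) \<bullet> snd i)) * ((1/2 + \<sigma>^2) * (mu (fst i) \<bullet> snd i)))"
    unfolding eq using r(2) by (simp add: Av)
  also have "\<dots> = (1/2 + \<sigma>^2)^2 * (\<Sum>c\<in>UNIV. \<Sum>b\<in>Basis. (mu c \<bullet> b) * (mu c \<bullet> b))"
    by (simp add: sum_prod_split sum_distrib_left power2_eq_square mult_ac)
  also have "\<dots> = 2 * (1/2 + \<sigma>^2)^2"
    by (simp add: sum_mu_sq UNIV_bool)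
  finally show "(\<integral>\<omega>. pr (snd (\<omega> a)) (snd (\<omega> b)) * (snd (\<omega> a) \<bullet> snd (\<omega> b)) \<partial>PiM I (\<lambda>_. M)) = 2 * (1/2 + \<sigma>^2)^2" .
qed

lemma GEN_h:
  fixes I :: "nat set"
  assumes I: "finite I" "a \<in> I" "b \<in> I" "c \<in> I" "a \<noteq> b" "a \<noteq> c" "b \<noteq> c"
  shows "integrable (PiM I (\<lambda>_. M)) (\<lambda>\<omega>. pr (snd (\<omega> a)) (snd (\<omega> b)) * pr (snd (\<omega> a)) (snd (\<omega> c)) * (snd (\<omega> b) \<bullet> snd (\<omega> c)))"
    "(\<integral>\<omega>. pr (snd (\<omega> a)) (snd (\<omega> b)) * pr (snd (\<omega> a)) (snd (\<omega> c)) * (snd (\<omega> b) \<bullet> snd (\<omega> c)) \<partial>PiM I (\<lambda>_. M)) = 2 * (1/2 + \<sigma>^2)^3"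
proof -
  define A where "A i p = (mu (fst (snd i)) \<bullet> snd p) * (mu (snd (snd i)) \<bullet> snd p)" for i :: "(real^'n) \<times> bool \<times> bool" and p :: "bool \<times> (real^'n)"
  define B where "B i p = (mu (fst (snd i)) \<bullet> snd p) * (fst i \<bullet> snd p)" for i :: "(real^'n) \<times> bool \<times> bool" and p :: "bool \<times> (real^'n)"
  define C where "C i p = (mu (snd (snd i)) \<bullet> snd p) * (fst i \<bullet> snd p)" for i :: "(real^'n) \<times> bool \<times> bool" and p :: "bool \<times> (real^'n)"
  have eq: "(\<lambda>\<omega>. pr (snd (\<omega> a)) (snd (\<omega> b)) * pr (snd (\<omega> a)) (snd (\<omega> c)) * (snd (\<omega> b) \<bullet> snd (\<omega> c))) =
      (\<lambda>\<omega>. \<Sum>i\<in>Basis \<times> UNIV \<times> UNIV. A i (\<omega> a) * B i (\<omega> b) * C i (\<omega> c))"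
    unfolding A_def B_def C_def by (subst Hh_exp) simp
  have Ai: "integrable M (A i)" "integrable M (B i)" "integrable M (C i)" for i
    unfolding A_def B_def C_def by (rule M_2(1))+
  have Av: "integral\<^sup>L M (A i) = (1/2 + \<sigma>^2) * (if fst (snd i) = snd (snd i) then 1 else 0)"
    "integral\<^sup>L M (B i) = (1/2 + \<sigma>^2) * (mu (fst (snd i)) \<bullet> fst i)"
    "integral\<^sup>L M (C i) = (1/2 + \<sigma>^2) * (mu (snd (snd i)) \<bullet> fst i)" for i
    unfolding A_def B_def C_def by (simp_all add: M_2(2) Q_mu mu_inner)
  note r = E3sum[where A=A and B=B and C=C and S="Basis \<times> UNIV \<times> UNIV", OF I _ Ai(1) Ai(2) Ai(3)]
  show "integrable (PiM I (\<lambda>_. M)) (\<lambda>\<omega>. pr (snd (\<omega> a)) (snd (\<omega> b)) * pr (snd (\<omega> a)) (snd (\<omega> c)) * (snd (\<omega> b) \<bullet> snd (\<omega> c)))"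
    unfolding eq using r(1) by simp
  have "(\<integral>\<omega>. pr (snd (\<omega> a)) (snd (\<omega> b)) * pr (snd (\<omega> a)) (snd (\<omega> c)) * (snd (\<omega> b) \<bullet> snd (\<omega> c)) \<partial>PiM I (\<lambda>_. M))
      = (\<Sum>i\<in>Basis \<times> UNIV \<times> UNIV. ((1/2 + \<sigma>^2) * (if fst (snd i) = snd (snd i) then 1 else 0)) * ((1/2 + \<sigma>^2) * (mu (fst (snd i)) \<bullet> fst i)) * ((1/2 + \<sigma>^2) * (mu (snd (snd i)) \<bullet> fst i)))"
    unfolding eq using r(2) by (simp add: Av)
  also have "\<dots> = (1/2 + \<sigma>^2)^3 * (\<Sum>c\<in>UNIV. \<Sum>b\<in>Basis. (mu c \<bullet> b) * (mu c \<bullet> b))"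
  proof -
    have "(\<Sum>i\<in>Basis \<times> UNIV \<times> UNIV. ((1/2 + \<sigma>^2) * (if fst (snd i) = snd (snd i) then 1 else 0)) * ((1/2 + \<sigma>^2) * (mu (fst (snd i)) \<bullet> fst i)) * ((1/2 + \<sigma>^2) * (mu (snd (snd i)) \<bullet> fst i)))
       = (1/2 + \<sigma>^2)^3 * (\<Sum>b\<in>Basis. \<Sum>c\<in>UNIV. \<Sum>c'\<in>UNIV. (if c = c' then 1 else 0) * (mu c \<bullet> b) * (mu c' \<bullet> b))"
      apply (subst sum_prod_split, simp, simp)
      apply (simp only: sum_distrib_left)
      apply (intro sum.cong refl)
      apply (subst sum_prod_split, simp, simp)
      apply (simp add: power3_eq_cube mult_ac)
      done
    also have "(\<Sum>b\<in>Basis. \<Sum>c\<in>UNIV. \<Sum>c'\<in>UNIV. (if c = c' then 1 else 0) * (mu c \<bullet> b) * (mu c' \<bullet> b))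
       = (\<Sum>b\<in>Basis. \<Sum>c\<in>UNIV. (mu c \<bullet> b) * (mu c \<bullet> b))"
      by (intro sum.cong refl) (simp only: mult.assoc sum_if_eq_bool)
    also have "\<dots> = (\<Sum>c\<in>UNIV. \<Sum>b\<in>Basis. (mu c \<bullet> b) * (mu c \<bullet> b))"
      by (rule sum.swap)
    finally show ?thesis .
  qed
  also have "\<dots> = 2 * (1/2 + \<sigma>^2)^3"
    by (simp add: sum_mu_sq UNIV_bool)
  finally show "(\<integral>\<omega>. pr (snd (\<omega> a)) (snd (\<omega> b)) * pr (snd (\<omega> a)) (snd (\<omega> c)) * (snd (\<omega> b) \<bullet> snd (\<omega> c)) \<partial>PiM I (\<lambda>_. M)) = 2 * (1/2 + \<sigma>^2)^3" .
qed

end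


lemma sum_if_eq_bool2: "(\<Sum>c\<in>(UNIV::bool set). (if c = c0 then 1 else 0) * (g c :: real)) = g c0"
  by (cases c0) (simp_all add: UNIV_bool)

context setting begin

lemma GEN_nsq:
  fixes I :: "nat set"
  assumes I: "finite I" "a \<in> I"
  shows "integrable (PiM I (\<lambda>_. M)) (\<lambda>\<omega>. (norm (snd (\<omega> a)))^2)"
    "(\<integral>\<omega>. (norm (snd (\<omega> a)))^2 \<partial>PiM I (\<lambda>_. M)) = 1 + real CARD('n) * \<sigma>^2"
  using E1[OF I M_nsq(1)] M_nsq(2) by simp_all

lemma GEN_hc:
  fixes I :: "nat set"
  assumes I: "finite I" "a \<in> I" "b \<in> I" "c \<in> I" "a \<noteq> b" "a \<noteq> c" "b \<noteq> c"
  shows "integrable (PiM I (\<lambda>_. M)) (\<lambda>\<omega>. ind c0 (\<omega> a) * (pr (snd (\<omega> a)) (snd (\<omega> b)) * pr (snd (\<omega> a)) (snd (\<omega> c)) * (snd (\<omega> b) \<bullet> snd (\<omega> c))))"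
    "(\<integral>\<omega>. ind c0 (\<omega> a) * (pr (snd (\<omega> a)) (snd (\<omega> b)) * pr (snd (\<omega> a)) (snd (\<omega> c)) * (snd (\<omega> b) \<bullet> snd (\<omega> c))) \<partial>PiM I (\<lambda>_. M)) = (1/2 + \<sigma>^2)^3"
proof -
  define A where "A i p = ind c0 p * ((mu (fst (snd i)) \<bullet> snd p) * (mu (snd (snd i)) \<bullet> snd p))" for i :: "(real^'n) \<times> bool \<times> bool" and p :: "bool \<times> (real^'n)"
  define B where "B i p = (mu (fst (snd i)) \<bullet> snd p) * (fst i \<bullet> snd p)" for i :: "(real^'n) \<times> bool \<times> bool" and p :: "bool \<times> (real^'n)"
  define C where "C i p = (mu (snd (snd i)) \<bullet> snd p) * (fst i \<bullet> snd p)" for i :: "(real^'n) \<times> bool \<times> bool" and p :: "bool \<times> (real^'n)"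
  have eq: "(\<lambda>\<omega>. ind c0 (\<omega> a) * (pr (snd (\<omega> a)) (snd (\<omega> b)) * pr (snd (\<omega> a)) (snd (\<omega> c)) * (snd (\<omega> b) \<bullet> snd (\<omega> c)))) =
      (\<lambda>\<omega>. \<Sum>i\<in>Basis \<times> UNIV \<times> UNIV. A i (\<omega> a) * B i (\<omega> b) * C i (\<omega> c))"
    unfolding A_def B_def C_def by (subst Hh_exp) (simp add: sum_distrib_left mult_ac)
  have Ai: "integrable M (A i)" "integrable M (B i)" "integrable M (C i)" for i
    unfolding A_def B_def C_def by (rule M_c2(1) M_2(1))+
  define K where "K = 1/2 + \<sigma>^2"
  have Av: "integral\<^sup>L M (A i) = ((mu (fst (snd i)) \<bullet> mu c0) * (mu (snd (snd i)) \<bullet> mu c0) + \<sigma>^2 * (if fst (snd i) = snd (snd i) then 1 else 0)) / 2"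
    "integral\<^sup>L M (B i) = K * (mu (fst (snd i)) \<bullet> fst i)"
    "integral\<^sup>L M (C i) = K * (mu (snd (snd i)) \<bullet> fst i)" for i
    unfolding A_def B_def C_def K_def by (simp_all add: M_2(2) M_c2(2) Q_mu mu_inner)
  note r = E3sum[where A=A and B=B and C=C and S="Basis \<times> UNIV \<times> UNIV", OF I _ Ai(1) Ai(2) Ai(3)]
  show "integrable (PiM I (\<lambda>_. M)) (\<lambda>\<omega>. ind c0 (\<omega> a) * (pr (snd (\<omega> a)) (snd (\<omega> b)) * pr (snd (\<omega> a)) (snd (\<omega> c)) * (snd (\<omega> b) \<bullet> snd (\<omega> c))))"
    unfolding eq using r(1) by simp
  define D where "D c c' = ((mu c \<bullet> mu c0) * (mu c' \<bullet> mu c0) + \<sigma>^2 * (if c = c' then 1 else 0)) / 2" for c c'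
  have "(\<integral>\<omega>. ind c0 (\<omega> a) * (pr (snd (\<omega> a)) (snd (\<omega> b)) * pr (snd (\<omega> a)) (snd (\<omega> c)) * (snd (\<omega> b) \<bullet> snd (\<omega> c))) \<partial>PiM I (\<lambda>_. M))
      = (\<Sum>i\<in>Basis \<times> UNIV \<times> UNIV. D (fst (snd i)) (snd (snd i)) * (K * (mu (fst (snd i)) \<bullet> fst i)) * (K * (mu (snd (snd i)) \<bullet> fst i)))"
    unfolding eq using r(2) by (simp add: Av D_def)
  also have "\<dots> = K^2 * (\<Sum>b\<in>Basis. \<Sum>c\<in>UNIV. \<Sum>c'\<in>UNIV. D c c' * ((mu c \<bullet> b) * (mu c' \<bullet> b)))"
    apply (subst sum_prod_split, simp, simp)
    apply (simp only: sum_distrib_left)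
    apply (intro sum.cong refl)
    apply (subst sum_prod_split, simp, simp)
    apply (simp add: power2_eq_square mult_ac)
    done
  also have "(\<Sum>b\<in>Basis. \<Sum>c\<in>UNIV. \<Sum>c'\<in>UNIV. D c c' * ((mu c \<bullet> b) * (mu c' \<bullet> b)))
      = (\<Sum>c\<in>UNIV. \<Sum>c'\<in>UNIV. D c c' * (\<Sum>b\<in>Basis. (mu c \<bullet> b) * (mu c' \<bullet> b)))"
  proof -
    have "(\<Sum>b\<in>Basis. \<Sum>c\<in>UNIV. \<Sum>c'\<in>UNIV. D c c' * ((mu c \<bullet> b) * (mu c' \<bullet> b)))
        = (\<Sum>c\<in>UNIV. \<Sum>b\<in>Basis. \<Sum>c'\<in>UNIV. D c c' * ((mu c \<bullet> b) * (mu c' \<bullet> b)))"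
      by (rule sum.swap)
    also have "\<dots> = (\<Sum>c\<in>UNIV. \<Sum>c'\<in>UNIV. \<Sum>b\<in>Basis. D c c' * ((mu c \<bullet> b) * (mu c' \<bullet> b)))"
      by (intro sum.cong refl) (rule sum.swap)
    also have "\<dots> = (\<Sum>c\<in>UNIV. \<Sum>c'\<in>UNIV. D c c' * (\<Sum>b\<in>Basis. (mu c \<bullet> b) * (mu c' \<bullet> b)))"
      by (simp add: sum_distrib_left)
    finally show ?thesis .
  qed
  also have "\<dots> = (\<Sum>c\<in>UNIV. D c c)"
    by (intro sum.cong refl) (simp add: sum_mu_sq if_distrib[where f="\<lambda>x. D _ _ * x"] mult.commute[of "D _ _"] sum_if_eq_bool cong: if_cong)
  also have "\<dots> = K"
    by (cases c0) (simp_all add: D_def UNIV_bool mu_inner K_def field_simps)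
  finally show "(\<integral>\<omega>. ind c0 (\<omega> a) * (pr (snd (\<omega> a)) (snd (\<omega> b)) * pr (snd (\<omega> a)) (snd (\<omega> c)) * (snd (\<omega> b) \<bullet> snd (\<omega> c))) \<partial>PiM I (\<lambda>_. M)) = (1/2 + \<sigma>^2)^3"
    by (simp add: K_def power2_eq_square power3_eq_cube)
qed

lemma GEN_v:
  fixes I :: "nat set"
  assumes I: "finite I" "a \<in> I" "b \<in> I" "a \<noteq> b"
  shows "integrable (PiM I (\<lambda>_. M)) (\<lambda>\<omega>. ind c0 (\<omega> a) * pr (snd (\<omega> a)) (snd (\<omega> b)) * (e \<bullet> snd (\<omega> b)))"
    "(\<integral>\<omega>. ind c0 (\<omega> a) * pr (snd (\<omega> a)) (snd (\<omega> b)) * (e \<bullet> snd (\<omega> b)) \<partial>PiM I (\<lambda>_. M)) = (1/2 + \<sigma>^2) * (mu c0 \<bullet> e) / 2"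
proof -
  define A where "A c p = ind c0 p * (mu c \<bullet> snd p)" for c :: bool and p :: "bool \<times> (real^'n)"
  define B where "B c p = (mu c \<bullet> snd p) * (e \<bullet> snd p)" for c :: bool and p :: "bool \<times> (real^'n)"
  have eq: "(\<lambda>\<omega>. ind c0 (\<omega> a) * pr (snd (\<omega> a)) (snd (\<omega> b)) * (e \<bullet> snd (\<omega> b))) =
      (\<lambda>\<omega>. \<Sum>c\<in>UNIV. A c (\<omega> a) * B c (\<omega> b))"
    unfolding A_def B_def pr_def by (simp add: sum_distrib_left sum_distrib_right mult_ac)
  have Ai: "integrable M (A c)" "integrable M (B c)" for c
    unfolding A_def B_def by (rule M_c1(1) M_2(1))+
  have Av: "integral\<^sup>L M (A c) = (if c = c0 then 1 else 0) / 2" "integral\<^sup>L M (B c) = (1/2 + \<sigma>^2) * (mu c \<bullet> e)" for c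
    unfolding A_def B_def by (simp_all add: M_c1(2) M_2(2) Q_mu mu_inner)
  note r = E2sum[where A=A and B=B and S="UNIV", OF I _ Ai(1) Ai(2)]
  show "integrable (PiM I (\<lambda>_. M)) (\<lambda>\<omega>. ind c0 (\<omega> a) * pr (snd (\<omega> a)) (snd (\<omega> b)) * (e \<bullet> snd (\<omega> b)))"
    unfolding eq using r(1) by simp
  have "(\<integral>\<omega>. ind c0 (\<omega> a) * pr (snd (\<omega> a)) (snd (\<omega> b)) * (e \<bullet> snd (\<omega> b)) \<partial>PiM I (\<lambda>_. M))
     = (\<Sum>c\<in>UNIV. (if c = c0 then 1 else 0) * ((1/2 + \<sigma>^2) * (mu c \<bullet> e) / 2))"
    unfolding eq using r(2) by (simp add: Av)
  also have "\<dots> = (1/2 + \<sigma>^2) * (mu c0 \<bullet> e) / 2" by (rule sum_if_eq_bool2)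
  finally show "(\<integral>\<omega>. ind c0 (\<omega> a) * pr (snd (\<omega> a)) (snd (\<omega> b)) * (e \<bullet> snd (\<omega> b)) \<partial>PiM I (\<lambda>_. M)) = (1/2 + \<sigma>^2) * (mu c0 \<bullet> e) / 2" .
qed

end


lemma cube_bound:
  fixes a b c :: real
  assumes "0 \<le> a" "0 \<le> b" "0 \<le> c"
  shows "a * b * c \<le> a^3 + b^3 + c^3"
proof -
  define m where "m = max a (max b c)"
  have "a * b * c \<le> m * m * m" unfolding m_def using assms
    by (intro mult_mono) auto
  also have "\<dots> \<le> a^3 + b^3 + c^3" unfolding m_def using assms
    by (auto simp: max_def power3_eq_cube)
  finally show ?thesis .
qed

lemma le_1_sq: "(t::real) \<le> 1 + t^2"
proof -
  have "0 \<le> (t - 1/2)^2" by simp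
  then show ?thesis by (simp add: power2_eq_square algebra_simps)
qed

lemma three_prod_le:
  fixes x y z :: real
  shows "x^2 \<le> (1 + x^2) * (1 + y^2) * (1 + z^2)"
    "x^2 * y^2 \<le> (1 + x^2) * (1 + y^2) * (1 + z^2)"
    "x^2 * y^2 * z^2 \<le> (1 + x^2) * (1 + y^2) * (1 + z^2)"
proof -
  have a: "x^2 \<le> 1 + x^2" "y^2 \<le> 1 + y^2" "z^2 \<le> 1 + z^2" "1 \<le> 1 + y^2" "1 \<le> 1 + z^2" by auto
  have "x^2 * y^2 * z^2 \<le> (1 + x^2) * (1 + y^2) * (1 + z^2)"
    using a by (intro mult_mono) auto
  moreover have "x^2 * y^2 * 1 \<le> (1 + x^2) * (1 + y^2) * (1 + z^2)"
    using a by (intro mult_mono) auto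
  moreover have "x^2 * 1 * 1 \<le> (1 + x^2) * (1 + y^2) * (1 + z^2)"
    using a by (intro mult_mono) auto
  ultimately show "x^2 \<le> (1 + x^2) * (1 + y^2) * (1 + z^2)"
    "x^2 * y^2 \<le> (1 + x^2) * (1 + y^2) * (1 + z^2)"
    "x^2 * y^2 * z^2 \<le> (1 + x^2) * (1 + y^2) * (1 + z^2)" by simp_all
qed

context setting begin

definition Gg :: "real^'n \<Rightarrow> real^'n \<Rightarrow> real" where "Gg y u = pr y u * (y \<bullet> u)"
definition Hh :: "real^'n \<Rightarrow> real^'n \<Rightarrow> real^'n \<Rightarrow> real" where "Hh y u v = pr y u * pr y v * (u \<bullet> v)"
definition Floss :: "real \<Rightarrow> real^'n \<Rightarrow> real^'n \<Rightarrow> real^'n \<Rightarrow> real" where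
  "Floss lam y u v = (norm y)^2 - 2 * lam * (Gg y u + Gg y v) + 4 * lam^2 * Hh y u v"

definition Wv :: "real^'n \<Rightarrow> real" where "Wv x = (1 + (norm x)^2)^3"

lemma W_Wv: "W p = Wv (snd p)" by (simp add: W_def Wv_def)

lemma abs_inner_mu: "\<bar>mu c \<bullet> y\<bar> \<le> norm y"
proof -
  have "norm (mu c) = 1" using n0 n1 by (simp add: mu_def)
  then show ?thesis using Cauchy_Schwarz_ineq2[of "mu c" y] by simp
qed

lemma pr_bound: "\<bar>pr y u\<bar> \<le> 2 * norm y * norm u"
proof -
  have "\<bar>(mu c \<bullet> y) * (mu c \<bullet> u)\<bar> \<le> norm y * norm u" for c
    unfolding abs_mult by (intro mult_mono abs_inner_mu) auto
  then have "\<bar>pr y u\<bar> \<le> (\<Sum>c\<in>(UNIV::bool set). norm y * norm u)"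
    unfolding pr_def by (intro order.trans[OF sum_abs] sum_mono) auto
  then show ?thesis by (simp add: UNIV_bool)
qed

lemma Gg_bound: "\<bar>Gg y u\<bar> \<le> 2 * ((norm y)^2 * (norm u)^2)"
proof -
  have "\<bar>Gg y u\<bar> = \<bar>pr y u\<bar> * \<bar>y \<bullet> u\<bar>" by (simp add: Gg_def abs_mult)
  also have "\<dots> \<le> (2 * norm y * norm u) * (norm y * norm u)"
    by (intro mult_mono pr_bound Cauchy_Schwarz_ineq2) auto
  finally show ?thesis by (simp add: power2_eq_square mult_ac)
qed

lemma Hh_bound: "\<bar>Hh y u v\<bar> \<le> 4 * ((norm y)^2 * (norm u)^2 * (norm v)^2)"
proof -
  have "\<bar>Hh y u v\<bar> = \<bar>pr y u\<bar> * \<bar>pr y v\<bar> * \<bar>u \<bullet> v\<bar>" by (simp add: Hh_def abs_mult)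
  also have "\<dots> \<le> (2 * norm y * norm u) * (2 * norm y * norm v) * (norm u * norm v)"
    by (intro mult_mono pr_bound Cauchy_Schwarz_ineq2) auto
  finally show ?thesis by (simp add: power2_eq_square mult_ac)
qed

lemma abc_W: "(1 + (norm y)^2) * (1 + (norm u)^2) * (1 + (norm v)^2) \<le> Wv y + Wv u + Wv v"
  unfolding Wv_def by (rule cube_bound) auto

lemma Floss_bound: "\<bar>Floss lam y u v\<bar> \<le> (1 + 8 * \<bar>lam\<bar> + 16 * lam^2) * (Wv y + Wv u + Wv v)"
proof -
  define P where "P = (1 + (norm y)^2) * (1 + (norm u)^2) * (1 + (norm v)^2)"
  note t = three_prod_le[of "norm y" "norm u" "norm v", folded P_def]
  have t2: "(norm y)^2 * (norm v)^2 \<le> P"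
    using three_prod_le(2)[of "norm y" "norm v" "norm u"] unfolding P_def by (simp add: mult_ac)
  have g1: "\<bar>Gg y u\<bar> \<le> 2 * P" using Gg_bound[of y u] t(2) by simp
  have g2: "\<bar>Gg y v\<bar> \<le> 2 * P" using Gg_bound[of y v] t2 by simp
  have h: "\<bar>Hh y u v\<bar> \<le> 4 * P" using Hh_bound[of y u v] t(3) by simp
  have e1: "\<bar>Floss lam y u v\<bar> \<le> \<bar>(norm y)^2\<bar> + \<bar>2 * lam * (Gg y u + Gg y v)\<bar> + \<bar>4 * lam^2 * Hh y u v\<bar>"
    unfolding Floss_def by arith
  have e2: "\<bar>2 * lam * (Gg y u + Gg y v)\<bar> \<le> 2 * \<bar>lam\<bar> * (\<bar>Gg y u\<bar> + \<bar>Gg y v\<bar>)"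
    by (simp only: abs_mult abs_numeral) (rule mult_left_mono[OF abs_triangle_ineq], simp)
  have "\<bar>Floss lam y u v\<bar> \<le> (norm y)^2 + 2 * \<bar>lam\<bar> * (\<bar>Gg y u\<bar> + \<bar>Gg y v\<bar>) + 4 * lam^2 * \<bar>Hh y u v\<bar>"
    using e1 e2 by (simp add: abs_mult)
  also have "\<dots> \<le> P + 2 * \<bar>lam\<bar> * (2 * P + 2 * P) + 4 * lam^2 * (4 * P)"
    using t(1) g1 g2 h by (intro add_mono mult_left_mono) auto
  also have "\<dots> = (1 + 8 * \<bar>lam\<bar> + 16 * lam^2) * P" by (simp add: algebra_simps)
  also have "\<dots> \<le> (1 + 8 * \<bar>lam\<bar> + 16 * lam^2) * (Wv y + Wv u + Wv v)"
    unfolding P_def by (intro mult_left_mono abc_W) auto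
  finally show ?thesis .
qed

lemma indHh_bound: "\<bar>ind c p * Hh y u v\<bar> \<le> 4 * (Wv y + Wv u + Wv v)"
proof -
  have "\<bar>ind c p * Hh y u v\<bar> \<le> \<bar>Hh y u v\<bar>" by (simp add: ind_def abs_mult)
  also have "\<dots> \<le> 4 * ((1 + (norm y)^2) * (1 + (norm u)^2) * (1 + (norm v)^2))"
    using Hh_bound[of y u v] three_prod_le(3)[of "norm y" "norm u" "norm v"] by simp
  also have "\<dots> \<le> 4 * (Wv y + Wv u + Wv v)" by (intro mult_left_mono abc_W) auto
  finally show ?thesis .
qed

lemma indV_bound: "norm ((ind c p * pr y u) *\<^sub>R u) \<le> 2 * (Wv y + Wv u + Wv u)"
proof -
  have "norm ((ind c p * pr y u) *\<^sub>R u) \<le> \<bar>pr y u\<bar> * norm u" by (simp add: ind_def abs_mult)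
  also have "\<dots> \<le> (2 * norm y * norm u) * norm u" by (intro mult_right_mono pr_bound) auto
  also have "\<dots> \<le> 2 * ((1 + (norm y)^2) * (1 + (norm u)^2) * (1 + (norm u)^2))"
  proof -
    have "norm y \<le> 1 + (norm y)^2" by (rule le_1_sq)
    moreover have "norm u * norm u \<le> (1 + (norm u)^2) * (1 + (norm u)^2)"
      using le_1_sq[of "norm u"] by (intro mult_mono) auto
    ultimately have "norm y * (norm u * norm u) \<le> (1 + (norm y)^2) * ((1 + (norm u)^2) * (1 + (norm u)^2))"
      by (rule mult_mono) auto
    then show ?thesis by (simp add: mult_ac)
  qed
  also have "\<dots> \<le> 2 * (Wv y + Wv u + Wv u)" by (intro mult_left_mono abc_W) auto
  finally show ?thesis .
qed

end


context setting begin

lemma int_dom3: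
  fixes f :: "(nat \<Rightarrow> bool \<times> (real^'n)) \<Rightarrow> 'b::{banach, second_countable_topology}" and I :: "nat set"
  assumes I: "finite I" "a \<in> I" "b \<in> I" "c \<in> I" and fm: "f \<in> borel_measurable (PiM I (\<lambda>_. M))"
    and fb: "\<And>\<omega>. norm (f \<omega>) \<le> K * (Wv (snd (\<omega> a)) + Wv (snd (\<omega> b)) + Wv (snd (\<omega> c)))"
  shows "integrable (PiM I (\<lambda>_. M)) f" "norm (integral\<^sup>L (PiM I (\<lambda>_. M)) f) \<le> 3 * K * integral\<^sup>L M W"
proof -
  define g where "g \<omega> = K * (W (\<omega> a) + W (\<omega> b) + W (\<omega> c))" for \<omega> :: "nat \<Rightarrow> bool \<times> (real^'n)"
  have gi: "integrable (PiM I (\<lambda>_. M)) g"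
    unfolding g_def using E1(1)[OF I(1) _ M_Wi] I by auto
  have gv: "integral\<^sup>L (PiM I (\<lambda>_. M)) g = 3 * K * integral\<^sup>L M W"
    unfolding g_def using E1[OF I(1) _ M_Wi] I by (simp add: algebra_simps)
  have fg: "norm (f \<omega>) \<le> g \<omega>" for \<omega> using fb[of \<omega>] by (simp add: g_def W_Wv)
  show fi: "integrable (PiM I (\<lambda>_. M)) f"
  proof (rule Bochner_Integration.integrable_bound[OF gi fm])
    show "AE x in PiM I (\<lambda>_. M). norm (f x) \<le> norm (g x)"
      using fg by (intro AE_I2) (metis abs_ge_self order_trans real_norm_def)
  qed
  have "norm (integral\<^sup>L (PiM I (\<lambda>_. M)) f) \<le> (\<integral>\<omega>. norm (f \<omega>) \<partial>PiM I (\<lambda>_. M))"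
    by (rule integral_norm_bound)
  also have "\<dots> \<le> integral\<^sup>L (PiM I (\<lambda>_. M)) g"
    using fi gi fg by (intro integral_mono) auto
  finally show "norm (integral\<^sup>L (PiM I (\<lambda>_. M)) f) \<le> 3 * K * integral\<^sup>L M W" using gv by simp
qed

lemma T_eq: "T_lin lam \<mu>0 \<mu>1 L X l = (2 / real L) *\<^sub>R (\<Sum>k<L. (lam * pr (X l) (X k)) *\<^sub>R X k)"
  unfolding T_lin_def pr_expl ..

lemma T_inner1: "X l \<bullet> T_lin lam \<mu>0 \<mu>1 L X l = 2 / real L * lam * (\<Sum>k<L. Gg (X l) (X k))"
  unfolding T_eq Gg_def by (simp add: inner_sum_right sum_distrib_left mult_ac)

lemma T_inner2: "T_lin lam \<mu>0 \<mu>1 L X l \<bullet> T_lin lam \<mu>0 \<mu>1 L X l = 4 / (real L)^2 * lam^2 * (\<Sum>k<L. \<Sum>m<L. Hh (X l) (X k) (X m))"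
  unfolding T_eq Hh_def
  by (simp add: inner_sum_right inner_sum_left sum_distrib_left power2_eq_square mult_ac inner_commute)

lemma T_sq: "(norm (T_lin lam \<mu>0 \<mu>1 L X l))^2 = 4 / (real L)^2 * lam^2 * (\<Sum>k<L. \<Sum>m<L. Hh (X l) (X k) (X m))"
  by (simp add: power2_norm_eq_inner T_inner2)

lemma loss_pt:
  assumes L: "0 < L"
  shows "(norm (X l - T_lin lam \<mu>0 \<mu>1 L X l))^2 = (\<Sum>k<L. \<Sum>m<L. Floss lam (X l) (X k) (X m)) / (real L)^2"
proof -
  define T where "T = T_lin lam \<mu>0 \<mu>1 L X l"
  define y where "y = X l"
  have "(norm (y - T))^2 = y \<bullet> y - 2 * (y \<bullet> T) + T \<bullet> T"
    by (simp add: power2_norm_eq_inner inner_diff inner_commute)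
  also have "\<dots> = (norm y)^2 - 4 / real L * lam * (\<Sum>k<L. Gg y (X k)) + 4 / (real L)^2 * lam^2 * (\<Sum>k<L. \<Sum>m<L. Hh y (X k) (X m))"
    unfolding T_def y_def T_inner1 T_inner2 by (simp add: power2_norm_eq_inner)
  also have "\<dots> = (\<Sum>k<L. \<Sum>m<L. Floss lam y (X k) (X m)) / (real L)^2"
  proof -
    have "(\<Sum>k<L. \<Sum>m<L. Floss lam y (X k) (X m)) =
       (real L)^2 * (norm y)^2 - 2 * lam * (real L * (\<Sum>k<L. Gg y (X k)) + real L * (\<Sum>m<L. Gg y (X m)))
        + 4 * lam^2 * (\<Sum>k<L. \<Sum>m<L. Hh y (X k) (X m))"
      unfolding Floss_def
      by (simp add: sum.distrib sum_subtractf sum_distrib_left[symmetric] sum_distrib_right[symmetric] power2_eq_square algebra_simps)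
    then have F: "(\<Sum>k<L. \<Sum>m<L. Floss lam y (X k) (X m)) =
       (real L)^2 * (norm y)^2 - 4 * lam * real L * (\<Sum>k<L. Gg y (X k)) + 4 * lam^2 * (\<Sum>k<L. \<Sum>m<L. Hh y (X k) (X m))"
      by simp
    have "(norm y)^2 - 4 / real L * lam * (\<Sum>k<L. Gg y (X k)) + 4 / (real L)^2 * lam^2 * (\<Sum>k<L. \<Sum>m<L. Hh y (X k) (X m))
      = ((real L)^2 * (norm y)^2 - 4 * lam * real L * (\<Sum>k<L. Gg y (X k)) + 4 * lam^2 * (\<Sum>k<L. \<Sum>m<L. Hh y (X k) (X m))) / (real L)^2"
      using L by (simp add: field_simps power2_eq_square)
    then show ?thesis unfolding F .
  qed
  finally show ?thesis unfolding T_def y_def .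
qed

end


lemma lim_from_bound:
  fixes f :: "nat \<Rightarrow> real"
  assumes "\<And>L. 1 \<le> L \<Longrightarrow> \<bar>f L - C\<bar> \<le> D / real L"
  shows "f \<longlonglongrightarrow> C"
proof -
  have "(\<lambda>L. f L - C) \<longlonglongrightarrow> 0"
  proof (rule Lim_null_comparison)
    show "\<forall>\<^sub>F L in sequentially. norm (f L - C) \<le> D / real L"
      using assms by (intro eventually_sequentiallyI[of 1]) auto
    show "(\<lambda>L. D / real L) \<longlonglongrightarrow> 0" by (rule lim_const_over_n)
  qed
  then show ?thesis by (simp add: LIM_zero_iff)
qed

lemma sum_est:
  fixes E :: "nat \<Rightarrow> nat \<Rightarrow> real"
  assumes l: "l < L" and D: "0 \<le> D"
    and b: "\<And>k m. k < L \<Longrightarrow> m < L \<Longrightarrow> \<bar>E k m - C\<bar> \<le> D * (of_bool (k = l) + of_bool (m = l) + of_bool (k = m))"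
  shows "\<bar>(\<Sum>k<L. \<Sum>m<L. E k m) - (real L)^2 * C\<bar> \<le> 3 * D * real L"
proof -
  have "(\<Sum>k<L. \<Sum>m<L. E k m) - (real L)^2 * C = (\<Sum>k<L. \<Sum>m<L. E k m - C)"
    by (simp add: sum_subtractf power2_eq_square)
  also have "\<bar>\<dots>\<bar> \<le> (\<Sum>k<L. \<Sum>m<L. \<bar>E k m - C\<bar>)"
    by (rule order.trans[OF sum_abs]) (intro sum_mono sum_abs)
  also have "\<dots> \<le> (\<Sum>k<L. \<Sum>m<L. D * (of_bool (k = l) + of_bool (m = l) + of_bool (k = m)))"
    by (intro sum_mono b) auto
  also have "\<dots> = 3 * D * real L"
    using l by (simp add: sum.distrib sum_distrib_left[symmetric] algebra_simps)
  finally show ?thesis .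
qed

context setting begin

lemma Floss_meas:
  fixes I :: "nat set"
  assumes "l \<in> I" "k \<in> I" "m \<in> I"
  shows "(\<lambda>\<omega>. Floss lam (snd (\<omega> l)) (snd (\<omega> k)) (snd (\<omega> m))) \<in> borel_measurable (PiM I (\<lambda>_. M))"
proof -
  note [measurable] = meas_snd[OF assms(1)] meas_snd[OF assms(2)] meas_snd[OF assms(3)]
  show ?thesis unfolding Floss_def Gg_def Hh_def pr_def by measurable
qed

definition Kf :: "real \<Rightarrow> real" where "Kf lam = 1 + 8 * \<bar>lam\<bar> + 16 * lam^2"

definition C5 :: "real \<Rightarrow> real" where
  "C5 lam = 1 + real CARD('n) * \<sigma>^2 - 8 * lam * (1/2 + \<sigma>^2)^2 + 8 * lam^2 * (1/2 + \<sigma>^2)^3"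

lemma E_Floss:
  fixes I :: "nat set"
  assumes I: "finite I" "l \<in> I" "k \<in> I" "m \<in> I"
  shows "integrable (PiM I (\<lambda>_. M)) (\<lambda>\<omega>. Floss lam (snd (\<omega> l)) (snd (\<omega> k)) (snd (\<omega> m)))"
    "\<bar>\<integral>\<omega>. Floss lam (snd (\<omega> l)) (snd (\<omega> k)) (snd (\<omega> m)) \<partial>PiM I (\<lambda>_. M)\<bar> \<le> 3 * Kf lam * integral\<^sup>L M W"
    "l \<noteq> k \<Longrightarrow> l \<noteq> m \<Longrightarrow> k \<noteq> m \<Longrightarrow> (\<integral>\<omega>. Floss lam (snd (\<omega> l)) (snd (\<omega> k)) (snd (\<omega> m)) \<partial>PiM I (\<lambda>_. M)) = C5 lam"
proof -
  note d = int_dom3[OF I Floss_meas[OF I(2-4), of lam], where K="Kf lam"]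
  have b: "norm (Floss lam (snd (\<omega> l)) (snd (\<omega> k)) (snd (\<omega> m))) \<le> Kf lam * (Wv (snd (\<omega> l)) + Wv (snd (\<omega> k)) + Wv (snd (\<omega> m)))" for \<omega>
    using Floss_bound by (simp add: Kf_def)
  show "integrable (PiM I (\<lambda>_. M)) (\<lambda>\<omega>. Floss lam (snd (\<omega> l)) (snd (\<omega> k)) (snd (\<omega> m)))"
    using d(1)[OF b] .
  show "\<bar>\<integral>\<omega>. Floss lam (snd (\<omega> l)) (snd (\<omega> k)) (snd (\<omega> m)) \<partial>PiM I (\<lambda>_. M)\<bar> \<le> 3 * Kf lam * integral\<^sup>L M W"
    using d(2)[OF b] by simp
  assume dist: "l \<noteq> k" "l \<noteq> m" "k \<noteq> m"
  note n = GEN_nsq[OF I(1,2)]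
  note g1 = GEN_g[OF I(1,2,3) dist(1)]
  note g2 = GEN_g[OF I(1,2,4) dist(2)]
  note h = GEN_h[OF I dist]
  have eq: "(\<lambda>\<omega>. Floss lam (snd (\<omega> l)) (snd (\<omega> k)) (snd (\<omega> m))) =
     (\<lambda>\<omega>. (norm (snd (\<omega> l)))^2 - 2 * lam * (pr (snd (\<omega> l)) (snd (\<omega> k)) * (snd (\<omega> l) \<bullet> snd (\<omega> k))
        + pr (snd (\<omega> l)) (snd (\<omega> m)) * (snd (\<omega> l) \<bullet> snd (\<omega> m)))
        + 4 * lam^2 * (pr (snd (\<omega> l)) (snd (\<omega> k)) * pr (snd (\<omega> l)) (snd (\<omega> m)) * (snd (\<omega> k) \<bullet> snd (\<omega> m))))"
    unfolding Floss_def Gg_def Hh_def ..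
  show "(\<integral>\<omega>. Floss lam (snd (\<omega> l)) (snd (\<omega> k)) (snd (\<omega> m)) \<partial>PiM I (\<lambda>_. M)) = C5 lam"
    unfolding eq using n g1 g2 h
    by (simp add: Bochner_Integration.integral_add Bochner_Integration.integral_diff
        Bochner_Integration.integrable_add Bochner_Integration.integrable_diff C5_def algebra_simps)
qed

end


context setting begin

lemma seqM: "seq_M L \<mu>0 \<mu>1 \<sigma> = PiM {..<L} (\<lambda>_. M)"
  unfolding seq_M_def ..

lemma loss_limit: "(\<lambda>L. lin_loss lam \<mu>0 \<mu>1 \<sigma> L) \<longlonglongrightarrow> C5 lam"
proof (rule lim_from_bound)
  define B where "B = 3 * Kf lam * integral\<^sup>L M W"
  define D0 where "D0 = B + \<bar>C5 lam\<bar>"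
  have D0: "0 \<le> D0"
  proof -
    have "0 \<le> integral\<^sup>L M W" by (rule integral_nonneg_AE) (simp add: W_def)
    moreover have "0 \<le> Kf lam" by (simp add: Kf_def)
    ultimately show ?thesis unfolding D0_def B_def by simp
  qed
  fix L :: nat assume L1: "1 \<le> L"
  then have L: "0 < L" by simp
  define E where "E l k m = (\<integral>\<omega>. Floss lam (snd (\<omega> l)) (snd (\<omega> k)) (snd (\<omega> m)) \<partial>PiM {..<L} (\<lambda>_. M))" for l k m
  define LT where "LT l = (\<integral>\<omega>. (norm (snd (\<omega> l) - T_lin lam \<mu>0 \<mu>1 L (\<lambda>k. snd (\<omega> k)) l))^2 \<partial>PiM {..<L} (\<lambda>_. M))" for l
  have LT_eq: "LT l = (\<Sum>k<L. \<Sum>m<L. E l k m) / (real L)^2" if l: "l < L" for l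
  proof -
    have "LT l = (\<integral>\<omega>. (\<Sum>k<L. \<Sum>m<L. Floss lam (snd (\<omega> l)) (snd (\<omega> k)) (snd (\<omega> m))) / (real L)^2 \<partial>PiM {..<L} (\<lambda>_. M))"
      unfolding LT_def
    proof (rule Bochner_Integration.integral_cong[OF refl])
      fix \<omega> :: "nat \<Rightarrow> bool \<times> (real^'n)"
      show "(norm (snd (\<omega> l) - T_lin lam \<mu>0 \<mu>1 L (\<lambda>k. snd (\<omega> k)) l))^2 = (\<Sum>k<L. \<Sum>m<L. Floss lam (snd (\<omega> l)) (snd (\<omega> k)) (snd (\<omega> m))) / (real L)^2"
        using loss_pt[OF L, of "\<lambda>k. snd (\<omega> k)" l lam] by simp
    qed
    also have "\<dots> = (\<integral>\<omega>. (\<Sum>k<L. \<Sum>m<L. Floss lam (snd (\<omega> l)) (snd (\<omega> k)) (snd (\<omega> m))) \<partial>PiM {..<L} (\<lambda>_. M)) / (real L)^2"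
      by simp
    also have "(\<integral>\<omega>. (\<Sum>k<L. \<Sum>m<L. Floss lam (snd (\<omega> l)) (snd (\<omega> k)) (snd (\<omega> m))) \<partial>PiM {..<L} (\<lambda>_. M)) = (\<Sum>k<L. \<Sum>m<L. E l k m)"
      unfolding E_def using l
      by (subst Bochner_Integration.integral_sum, intro Bochner_Integration.integrable_sum E_Floss(1), auto)
         (intro sum.cong refl, subst Bochner_Integration.integral_sum, auto intro!: E_Floss(1))
    finally show ?thesis .
  qed
  have Eb: "\<bar>E l k m - C5 lam\<bar> \<le> D0 * (of_bool (k = l) + of_bool (m = l) + of_bool (k = m))"
    if "l < L" "k < L" "m < L" for l k m
  proof (cases "l \<noteq> k \<and> l \<noteq> m \<and> k \<noteq> m")
    case True
    then have "E l k m = C5 lam" unfolding E_def using that by (intro E_Floss(3)) auto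
    then show ?thesis using True D0 by auto
  next
    case False
    have "\<bar>E l k m\<bar> \<le> B" unfolding E_def B_def using that by (intro E_Floss(2)) auto
    then have "\<bar>E l k m - C5 lam\<bar> \<le> D0" unfolding D0_def by linarith
    moreover have "1 \<le> of_bool (k = l) + of_bool (m = l) + (of_bool (k = m) :: real)" using False by auto
    ultimately show ?thesis using D0 by (smt (verit) mult_le_cancel_left1)
  qed
  have LTb: "\<bar>LT l - C5 lam\<bar> \<le> 3 * D0 / real L" if l: "l < L" for l
  proof -
    have b: "\<bar>(\<Sum>k<L. \<Sum>m<L. E l k m) - (real L)^2 * C5 lam\<bar> \<le> 3 * D0 * real L"
      by (rule sum_est[OF l D0]) (rule Eb[OF l])
    have e: "LT l - C5 lam = ((\<Sum>k<L. \<Sum>m<L. E l k m) - (real L)^2 * C5 lam) / (real L)^2"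
      using L by (simp add: LT_eq[OF l] field_simps)
    have "\<bar>LT l - C5 lam\<bar> = \<bar>(\<Sum>k<L. \<Sum>m<L. E l k m) - (real L)^2 * C5 lam\<bar> / (real L)^2"
      unfolding e by (simp add: abs_divide)
    also have "\<dots> \<le> (3 * D0 * real L) / (real L)^2"
      by (rule divide_right_mono[OF b]) simp
    also have "\<dots> = 3 * D0 / real L" using L by (simp add: power2_eq_square)
    finally show ?thesis .
  qed
  have "lin_loss lam \<mu>0 \<mu>1 \<sigma> L - C5 lam = (\<Sum>l<L. LT l - C5 lam) / real L"
    unfolding lin_loss_def seqM LT_def[symmetric] using L by (simp add: sum_subtractf field_simps)
  also have "\<bar>\<dots>\<bar> \<le> 3 * D0 / real L"
  proof -
    have "\<bar>\<Sum>l<L. LT l - C5 lam\<bar> \<le> (\<Sum>l<L. 3 * D0 / real L)"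
      by (rule order.trans[OF sum_abs]) (intro sum_mono LTb, simp)
    also have "\<dots> = 3 * D0" using L by simp
    finally have "\<bar>\<Sum>l<L. LT l - C5 lam\<bar> \<le> 3 * D0" .
    then show ?thesis by (simp add: abs_divide divide_right_mono)
  qed
  finally show "\<bar>lin_loss lam \<mu>0 \<mu>1 \<sigma> L - C5 lam\<bar> \<le> 3 * D0 / real L" .
qed

end


lemma vec_eq_by_inner:
  fixes x y :: "'a::real_inner"
  assumes "\<And>e. x \<bullet> e = y \<bullet> e"
  shows "x = y"
proof -
  have "(x - y) \<bullet> (x - y) = 0" using assms[of "x - y"] by (simp add: inner_diff_left)
  then show ?thesis by simp
qed

context setting begin

abbreviation "Tf lam L \<omega> \<equiv> T_lin lam \<mu>0 \<mu>1 L (\<lambda>k. snd (\<omega> k)) 0"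

definition fv :: "bool \<Rightarrow> nat \<Rightarrow> (nat \<Rightarrow> bool \<times> (real^'n)) \<Rightarrow> real^'n" where
  "fv c k \<omega> = (ind c (\<omega> 0) * pr (snd (\<omega> 0)) (snd (\<omega> k))) *\<^sub>R snd (\<omega> k)"

lemma E_Hc:
  fixes I :: "nat set"
  assumes I: "finite I" "0 \<in> I" "k \<in> I" "m \<in> I"
  shows "integrable (PiM I (\<lambda>_. M)) (\<lambda>\<omega>. ind c (\<omega> 0) * Hh (snd (\<omega> 0)) (snd (\<omega> k)) (snd (\<omega> m)))"
    "\<bar>\<integral>\<omega>. ind c (\<omega> 0) * Hh (snd (\<omega> 0)) (snd (\<omega> k)) (snd (\<omega> m)) \<partial>PiM I (\<lambda>_. M)\<bar> \<le> 3 * 4 * integral\<^sup>L M W"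
    "0 \<noteq> k \<Longrightarrow> 0 \<noteq> m \<Longrightarrow> k \<noteq> m \<Longrightarrow> (\<integral>\<omega>. ind c (\<omega> 0) * Hh (snd (\<omega> 0)) (snd (\<omega> k)) (snd (\<omega> m)) \<partial>PiM I (\<lambda>_. M)) = (1/2 + \<sigma>^2)^3"
proof -
  have fm: "(\<lambda>\<omega>. ind c (\<omega> 0) * Hh (snd (\<omega> 0)) (snd (\<omega> k)) (snd (\<omega> m))) \<in> borel_measurable (PiM I (\<lambda>_. M))"
  proof -
    note [measurable] = meas_snd[OF I(2)] meas_snd[OF I(3)] meas_snd[OF I(4)] meas_fst[OF I(2)]
    show ?thesis unfolding ind_def Hh_def pr_def by measurable
  qed
  note d = int_dom3[OF I fm, where K=4]
  have b: "norm (ind c (\<omega> 0) * Hh (snd (\<omega> 0)) (snd (\<omega> k)) (snd (\<omega> m))) \<le> 4 * (Wv (snd (\<omega> 0)) + Wv (snd (\<omega> k)) + Wv (snd (\<omega> m)))" for \<omega>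
    using indHh_bound by simp
  show "integrable (PiM I (\<lambda>_. M)) (\<lambda>\<omega>. ind c (\<omega> 0) * Hh (snd (\<omega> 0)) (snd (\<omega> k)) (snd (\<omega> m)))"
    using d(1)[OF b] .
  show "\<bar>\<integral>\<omega>. ind c (\<omega> 0) * Hh (snd (\<omega> 0)) (snd (\<omega> k)) (snd (\<omega> m)) \<partial>PiM I (\<lambda>_. M)\<bar> \<le> 3 * 4 * integral\<^sup>L M W"
    using d(2)[OF b] by simp
  assume dist: "0 \<noteq> k" "0 \<noteq> m" "k \<noteq> m"
  show "(\<integral>\<omega>. ind c (\<omega> 0) * Hh (snd (\<omega> 0)) (snd (\<omega> k)) (snd (\<omega> m)) \<partial>PiM I (\<lambda>_. M)) = (1/2 + \<sigma>^2)^3"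
    unfolding Hh_def by (rule GEN_hc(2)[OF I dist])
qed

lemma E_fv:
  fixes I :: "nat set"
  assumes I: "finite I" "0 \<in> I" "k \<in> I"
  shows "integrable (PiM I (\<lambda>_. M)) (fv c k)"
    "norm (integral\<^sup>L (PiM I (\<lambda>_. M)) (fv c k)) \<le> 3 * 2 * integral\<^sup>L M W"
    "0 \<noteq> k \<Longrightarrow> integral\<^sup>L (PiM I (\<lambda>_. M)) (fv c k) = ((1/2 + \<sigma>^2) / 2) *\<^sub>R mu c"
proof -
  have fm: "fv c k \<in> borel_measurable (PiM I (\<lambda>_. M))"
  proof -
    note [measurable] = meas_snd[OF I(2)] meas_snd[OF I(3)] meas_fst[OF I(2)]
    show ?thesis unfolding fv_def ind_def pr_def by measurable
  qed
  note d = int_dom3[OF I(1,2,3,3) fm, where K=2]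
  have b: "norm (fv c k \<omega>) \<le> 2 * (Wv (snd (\<omega> 0)) + Wv (snd (\<omega> k)) + Wv (snd (\<omega> k)))" for \<omega>
    unfolding fv_def by (rule indV_bound)
  show fi: "integrable (PiM I (\<lambda>_. M)) (fv c k)" using d(1)[OF b] .
  show "norm (integral\<^sup>L (PiM I (\<lambda>_. M)) (fv c k)) \<le> 3 * 2 * integral\<^sup>L M W"
    using d(2)[OF b] by simp
  assume k: "0 \<noteq> k"
  show "integral\<^sup>L (PiM I (\<lambda>_. M)) (fv c k) = ((1/2 + \<sigma>^2) / 2) *\<^sub>R mu c"
  proof (rule vec_eq_by_inner)
    fix e :: "real^'n"
    have "integral\<^sup>L (PiM I (\<lambda>_. M)) (fv c k) \<bullet> e = (\<integral>\<omega>. fv c k \<omega> \<bullet> e \<partial>PiM I (\<lambda>_. M))"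
      using fi by simp
    also have "\<dots> = (\<integral>\<omega>. ind c (\<omega> 0) * pr (snd (\<omega> 0)) (snd (\<omega> k)) * (e \<bullet> snd (\<omega> k)) \<partial>PiM I (\<lambda>_. M))"
      unfolding fv_def by (simp add: inner_commute)
    also have "\<dots> = (1/2 + \<sigma>^2) * (mu c \<bullet> e) / 2"
      by (rule GEN_v(2)[OF I k])
    also have "\<dots> = (((1/2 + \<sigma>^2) / 2) *\<^sub>R mu c) \<bullet> e" by simp
    finally show "integral\<^sup>L (PiM I (\<lambda>_. M)) (fv c k) \<bullet> e = (((1/2 + \<sigma>^2) / 2) *\<^sub>R mu c) \<bullet> e" .
  qed
qed

lemma indT_eq: "ind c (\<omega> 0) *\<^sub>R Tf lam L \<omega> = (2 * lam / real L) *\<^sub>R (\<Sum>k<L. fv c k \<omega>)"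
  unfolding T_eq fv_def by (simp add: scaleR_sum_right mult_ac)

lemma indTsq_eq: "ind c (\<omega> 0) * (norm (Tf lam L \<omega>))^2 = 4 / (real L)^2 * lam^2 * (\<Sum>k<L. \<Sum>m<L. ind c (\<omega> 0) * Hh (snd (\<omega> 0)) (snd (\<omega> k)) (snd (\<omega> m)))"
  unfolding T_sq by (simp add: sum_distrib_left sum_divide_distrib mult_ac)

end


context setting begin

definition IL :: "real \<Rightarrow> bool \<Rightarrow> nat \<Rightarrow> real" where
  "IL lam c L = (\<integral>\<omega>. ind c (\<omega> 0) * (norm (Tf lam L \<omega>))^2 \<partial>PiM {..<L} (\<lambda>_. M))"

definition VL :: "real \<Rightarrow> bool \<Rightarrow> nat \<Rightarrow> real^'n" where
  "VL lam c L = (\<integral>\<omega>. ind c (\<omega> 0) *\<^sub>R Tf lam L \<omega> \<partial>PiM {..<L} (\<lambda>_. M))"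

lemma IL_props:
  assumes L: "0 < L"
  shows "integrable (PiM {..<L} (\<lambda>_. M)) (\<lambda>\<omega>. ind c (\<omega> 0) * (norm (Tf lam L \<omega>))^2)"
    "IL lam c L = 4 / (real L)^2 * lam^2 * (\<Sum>k<L. \<Sum>m<L. \<integral>\<omega>. ind c (\<omega> 0) * Hh (snd (\<omega> 0)) (snd (\<omega> k)) (snd (\<omega> m)) \<partial>PiM {..<L} (\<lambda>_. M))"
proof -
  have i: "integrable (PiM {..<L} (\<lambda>_. M)) (\<lambda>\<omega>. ind c (\<omega> 0) * Hh (snd (\<omega> 0)) (snd (\<omega> k)) (snd (\<omega> m)))"
    if "k < L" "m < L" for k m using that L by (intro E_Hc(1)) auto
  show "integrable (PiM {..<L} (\<lambda>_. M)) (\<lambda>\<omega>. ind c (\<omega> 0) * (norm (Tf lam L \<omega>))^2)"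
    unfolding indTsq_eq
    apply (rule integrable_mult_right)
    apply (intro Bochner_Integration.integrable_sum i)
    apply auto
    done
  show "IL lam c L = 4 / (real L)^2 * lam^2 * (\<Sum>k<L. \<Sum>m<L. \<integral>\<omega>. ind c (\<omega> 0) * Hh (snd (\<omega> 0)) (snd (\<omega> k)) (snd (\<omega> m)) \<partial>PiM {..<L} (\<lambda>_. M))"
    unfolding IL_def indTsq_eq integral_mult_right_zero
    apply (rule arg_cong[where f="\<lambda>x. _ * x"])
    apply (subst Bochner_Integration.integral_sum)
     apply (intro Bochner_Integration.integrable_sum i; simp)
    apply (intro sum.cong refl)
    apply (subst Bochner_Integration.integral_sum)
     apply (intro i; simp)
    apply simp
    done
qed

lemma VL_props:
  assumes L: "0 < L"
  shows "integrable (PiM {..<L} (\<lambda>_. M)) (\<lambda>\<omega>. ind c (\<omega> 0) *\<^sub>R Tf lam L \<omega>)"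
    "VL lam c L = (2 * lam / real L) *\<^sub>R (\<Sum>k<L. integral\<^sup>L (PiM {..<L} (\<lambda>_. M)) (fv c k))"
proof -
  have i: "integrable (PiM {..<L} (\<lambda>_. M)) (fv c k)" if "k < L" for k using that L by (intro E_fv(1)) auto
  show "integrable (PiM {..<L} (\<lambda>_. M)) (\<lambda>\<omega>. ind c (\<omega> 0) *\<^sub>R Tf lam L \<omega>)"
    unfolding indT_eq using i by (auto intro!: Bochner_Integration.integrable_sum)
  show "VL lam c L = (2 * lam / real L) *\<^sub>R (\<Sum>k<L. integral\<^sup>L (PiM {..<L} (\<lambda>_. M)) (fv c k))"
    unfolding VL_def indT_eq using i by (simp add: Bochner_Integration.integral_sum)
qed

lemma IL_limit: "(\<lambda>L. IL lam c L) \<longlonglongrightarrow> 4 * lam^2 * (1/2 + \<sigma>^2)^3"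
proof (rule lim_from_bound)
  define K3 where "K3 = (1/2 + \<sigma>^2)^3"
  define D0 where "D0 = 3 * 4 * integral\<^sup>L M W + \<bar>K3\<bar>"
  have D0: "0 \<le> D0"
  proof -
    have "0 \<le> integral\<^sup>L M W" by (rule integral_nonneg_AE) (simp add: W_def)
    then show ?thesis unfolding D0_def by simp
  qed
  fix L :: nat assume L1: "1 \<le> L"
  then have L: "0 < L" by simp
  define E where "E k m = (\<integral>\<omega>. ind c (\<omega> 0) * Hh (snd (\<omega> 0)) (snd (\<omega> k)) (snd (\<omega> m)) \<partial>PiM {..<L} (\<lambda>_. M))" for k m
  have Eb: "\<bar>E k m - K3\<bar> \<le> D0 * (of_bool (k = 0) + of_bool (m = 0) + of_bool (k = m))"
    if "k < L" "m < L" for k m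
  proof (cases "0 \<noteq> k \<and> 0 \<noteq> m \<and> k \<noteq> m")
    case True
    then have "E k m = K3" unfolding E_def K3_def using that L by (intro E_Hc(3)) auto
    then show ?thesis using True D0 by auto
  next
    case False
    have "\<bar>E k m\<bar> \<le> 3 * 4 * integral\<^sup>L M W" unfolding E_def using that L by (intro E_Hc(2)) auto
    then have "\<bar>E k m - K3\<bar> \<le> D0" unfolding D0_def by linarith
    moreover have "1 \<le> of_bool (k = 0) + of_bool (m = 0) + (of_bool (k = m) :: real)" using False by auto
    ultimately show ?thesis using D0 by (smt (verit) mult_le_cancel_left1)
  qed
  have b: "\<bar>(\<Sum>k<L. \<Sum>m<L. E k m) - (real L)^2 * K3\<bar> \<le> 3 * D0 * real L"
    by (rule sum_est[OF L D0]) (rule Eb)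
  have e: "IL lam c L - 4 * lam^2 * K3 = 4 * lam^2 * (((\<Sum>k<L. \<Sum>m<L. E k m) - (real L)^2 * K3) / (real L)^2)"
    unfolding IL_props(2)[OF L] E_def[symmetric] using L by (simp add: field_simps)
  have "\<bar>IL lam c L - 4 * lam^2 * K3\<bar> = 4 * lam^2 * (\<bar>(\<Sum>k<L. \<Sum>m<L. E k m) - (real L)^2 * K3\<bar> / (real L)^2)"
    unfolding e by (simp add: abs_mult abs_divide)
  also have "\<dots> \<le> 4 * lam^2 * ((3 * D0 * real L) / (real L)^2)"
    by (intro mult_left_mono divide_right_mono b) auto
  also have "\<dots> = (4 * lam^2 * 3 * D0) / real L" using L by (simp add: power2_eq_square)
  finally show "\<bar>IL lam c L - 4 * lam^2 * (1/2 + \<sigma>^2)^3\<bar> \<le> (4 * lam^2 * 3 * D0) / real L"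
    unfolding K3_def .
qed

lemma VL_limit: "(\<lambda>L. VL lam c L) \<longlonglongrightarrow> (lam * (1/2 + \<sigma>^2)) *\<^sub>R mu c"
proof -
  define v where "v = ((1/2 + \<sigma>^2) / 2) *\<^sub>R mu c"
  define D where "D = 2 * \<bar>lam\<bar> * (3 * 2 * integral\<^sup>L M W + norm v)"
  have "(\<lambda>L. VL lam c L - (lam * (1/2 + \<sigma>^2)) *\<^sub>R mu c) \<longlonglongrightarrow> 0"
  proof (rule Lim_null_comparison)
    show "(\<lambda>L. D / real L) \<longlonglongrightarrow> 0" by (rule lim_const_over_n)
    show "\<forall>\<^sub>F L in sequentially. norm (VL lam c L - (lam * (1/2 + \<sigma>^2)) *\<^sub>R mu c) \<le> D / real L"
    proof (rule eventually_sequentiallyI[of 1])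
      fix L :: nat assume "1 \<le> L"
      then obtain L' where L': "L = Suc L'" by (cases L) auto
      then have L: "0 < L" by simp
      define Ev where "Ev k = integral\<^sup>L (PiM {..<L} (\<lambda>_. M)) (fv c k)" for k
      have Evk: "Ev (Suc k) = v" if "k < L'" for k
        unfolding Ev_def v_def using that L' by (intro E_fv(3)) auto
      have Ev0: "norm (Ev 0) \<le> 3 * 2 * integral\<^sup>L M W"
        unfolding Ev_def using L by (intro E_fv(2)) auto
      have "(\<Sum>k<L. Ev k) = Ev 0 + (\<Sum>k<L'. Ev (Suc k))"
        unfolding L' by (rule sum.lessThan_Suc_shift)
      also have "(\<Sum>k<L'. Ev (Suc k)) = (\<Sum>k<L'. v)"
        using Evk by simp
      also have "\<dots> = real L' *\<^sub>R v" by (simp only: sum_constant_scaleR card_lessThan)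
      finally have S: "(\<Sum>k<L. Ev k) = Ev 0 + real L' *\<^sub>R v" .
      have "VL lam c L - (lam * (1/2 + \<sigma>^2)) *\<^sub>R mu c = (2 * lam / real L) *\<^sub>R (Ev 0 - v)"
      proof -
        have t: "(lam * (1/2 + \<sigma>^2)) *\<^sub>R mu c = (2 * lam) *\<^sub>R v" by (simp add: v_def)
        have cf: "2 * lam / real L * real L' - 2 * lam = - (2 * lam / real L)"
          using L L' by (simp add: field_simps)
        have "(2 * lam / real L) *\<^sub>R (Ev 0 + real L' *\<^sub>R v) - (2 * lam) *\<^sub>R v
            = (2 * lam / real L) *\<^sub>R Ev 0 + (2 * lam / real L * real L' - 2 * lam) *\<^sub>R v"
          by (simp add: scaleR_add_right scaleR_diff_left)
        also have "\<dots> = (2 * lam / real L) *\<^sub>R (Ev 0 - v)"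
          unfolding cf by (simp add: scaleR_diff_right)
        finally show ?thesis
          unfolding VL_props(2)[OF L] Ev_def[symmetric] S t .
      qed
      also have "norm \<dots> \<le> D / real L"
      proof -
        have "norm (Ev 0 - v) \<le> 3 * 2 * integral\<^sup>L M W + norm v"
          using Ev0 norm_triangle_ineq4[of "Ev 0" v] by linarith
        then have "\<bar>2 * lam / real L\<bar> * norm (Ev 0 - v) \<le> \<bar>2 * lam / real L\<bar> * (3 * 2 * integral\<^sup>L M W + norm v)"
          by (intro mult_left_mono) auto
        then show ?thesis unfolding D_def using L by (simp add: abs_mult abs_divide)
      qed
      finally show "norm (VL lam c L - (lam * (1/2 + \<sigma>^2)) *\<^sub>R mu c) \<le> D / real L" .
    qed
  qed
  then show ?thesis by (simp add: LIM_zero_iff)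
qed

end


context setting begin

lemma condvar_eq:
  assumes L: "0 < L"
  shows "lin_cond_var lam \<mu>0 \<mu>1 \<sigma> c L = 2 * IL lam c L - 4 * (norm (VL lam c L))^2"
proof -
  define P where "P = PiM {..<L} (\<lambda>_. M)"
  define A where "A = {\<omega>\<in>space P. fst (\<omega> 0) = c}"
  define V where "V = VL lam c L"
  have indA: "indicator A \<omega> = ind c (\<omega> 0)" if "\<omega> \<in> space P" for \<omega>
    using that by (simp add: A_def indicator_def ind_def)
  have i0: "integrable P (\<lambda>\<omega>. ind c (\<omega> 0))" unfolding P_def using L by (intro E1(1) M_c0(1)) auto
  have v0: "(\<integral>\<omega>. ind c (\<omega> 0) \<partial>P) = 1/2" unfolding P_def using L E1(2)[OF _ _ M_c0(1), of "{..<L}" 0 c] M_c0(2) by simp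
  have mA: "measure P A = 1/2"
  proof -
    have "measure P A = measure P (A \<inter> space P)" by (rule arg_cong[where f="measure P"]) (auto simp: A_def)
    also have "\<dots> = integral\<^sup>L P (indicator A)" by simp
    also have "\<dots> = (\<integral>\<omega>. ind c (\<omega> 0) \<partial>P)" by (intro Bochner_Integration.integral_cong refl indA)
    finally show ?thesis using v0 by simp
  qed
  have ce: "cond_exp_event P A (Tf lam L) = 2 *\<^sub>R V"
  proof -
    have eqi: "(\<integral>\<omega>. indicator A \<omega> *\<^sub>R Tf lam L \<omega> \<partial>P) = (\<integral>\<omega>. ind c (\<omega> 0) *\<^sub>R Tf lam L \<omega> \<partial>P)"
      by (intro Bochner_Integration.integral_cong refl) (simp add: indA)
    have "cond_exp_event P A (Tf lam L) = (1 / measure P A) *\<^sub>R (\<integral>\<omega>. indicator A \<omega> *\<^sub>R Tf lam L \<omega> \<partial>P)"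
      by (simp only: cond_exp_event_def)
    also have "\<dots> = 2 *\<^sub>R V" unfolding mA eqi by (simp add: V_def VL_def P_def)
    finally show ?thesis .
  qed
  have iT2: "integrable P (\<lambda>\<omega>. ind c (\<omega> 0) * (norm (Tf lam L \<omega>))^2)" unfolding P_def by (rule IL_props(1)[OF L])
  have iT: "integrable P (\<lambda>\<omega>. ind c (\<omega> 0) *\<^sub>R Tf lam L \<omega>)" unfolding P_def by (rule VL_props(1)[OF L])
  have pw: "ind c (\<omega> 0) * (norm (Tf lam L \<omega> - 2 *\<^sub>R V))^2 =
      ind c (\<omega> 0) * (norm (Tf lam L \<omega>))^2 - 4 * ((ind c (\<omega> 0) *\<^sub>R Tf lam L \<omega>) \<bullet> V) + (4 * (V \<bullet> V)) * ind c (\<omega> 0)" for \<omega>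
    by (simp add: power2_norm_eq_inner inner_diff_left inner_diff_right inner_commute algebra_simps)
  have "(\<integral>\<omega>. indicator A \<omega> *\<^sub>R (norm (Tf lam L \<omega> - 2 *\<^sub>R V))^2 \<partial>P)
      = (\<integral>\<omega>. ind c (\<omega> 0) * (norm (Tf lam L \<omega>))^2 - 4 * ((ind c (\<omega> 0) *\<^sub>R Tf lam L \<omega>) \<bullet> V) + (4 * (V \<bullet> V)) * ind c (\<omega> 0) \<partial>P)"
  proof (intro Bochner_Integration.integral_cong refl)
    fix \<omega> assume "\<omega> \<in> space P"
    then show "indicator A \<omega> *\<^sub>R (norm (Tf lam L \<omega> - 2 *\<^sub>R V))^2 =
      ind c (\<omega> 0) * (norm (Tf lam L \<omega>))^2 - 4 * ((ind c (\<omega> 0) *\<^sub>R Tf lam L \<omega>) \<bullet> V) + (4 * (V \<bullet> V)) * ind c (\<omega> 0)"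
      using pw[of \<omega>] indA by simp
  qed
  also have "\<dots> = IL lam c L - 4 * (V \<bullet> V) + (4 * (V \<bullet> V)) * (1/2)"
  proof -
    have i2: "integrable P (\<lambda>\<omega>. 4 * ((ind c (\<omega> 0) *\<^sub>R Tf lam L \<omega>) \<bullet> V))"
      by (rule integrable_mult_right, rule integrable_inner_left, rule iT)
    have i3: "integrable P (\<lambda>\<omega>. (4 * (V \<bullet> V)) * ind c (\<omega> 0))" using i0 by auto
    have e2: "(\<integral>\<omega>. 4 * ((ind c (\<omega> 0) *\<^sub>R Tf lam L \<omega>) \<bullet> V) \<partial>P) = 4 * (V \<bullet> V)"
    proof -
      have "(\<integral>\<omega>. 4 * ((ind c (\<omega> 0) *\<^sub>R Tf lam L \<omega>) \<bullet> V) \<partial>P) = 4 * (\<integral>\<omega>. (ind c (\<omega> 0) *\<^sub>R Tf lam L \<omega>) \<bullet> V \<partial>P)"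
        by (rule integral_mult_right_zero)
      also have "(\<integral>\<omega>. (ind c (\<omega> 0) *\<^sub>R Tf lam L \<omega>) \<bullet> V \<partial>P) = (\<integral>\<omega>. ind c (\<omega> 0) *\<^sub>R Tf lam L \<omega> \<partial>P) \<bullet> V"
        by (rule integral_inner_left) (rule iT)
      also have "(\<integral>\<omega>. ind c (\<omega> 0) *\<^sub>R Tf lam L \<omega> \<partial>P) = V" by (simp add: V_def VL_def P_def)
      finally show ?thesis .
    qed
    have e3: "(\<integral>\<omega>. (4 * (V \<bullet> V)) * ind c (\<omega> 0) \<partial>P) = (4 * (V \<bullet> V)) * (1/2)"
      using v0 by simp
    show ?thesis
      by (subst Bochner_Integration.integral_add[OF Bochner_Integration.integrable_diff[OF iT2 i2] i3],
          subst Bochner_Integration.integral_diff[OF iT2 i2]) (simp only: e2 e3 IL_def P_def[symmetric])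
  qed
  finally have I: "(\<integral>\<omega>. indicator A \<omega> *\<^sub>R (norm (Tf lam L \<omega> - 2 *\<^sub>R V))^2 \<partial>P) = IL lam c L - 2 * (V \<bullet> V)"
    by simp
  have "lin_cond_var lam \<mu>0 \<mu>1 \<sigma> c L = cond_var_event P A (Tf lam L)"
    unfolding lin_cond_var_def seqM P_def A_def ..
  also have "\<dots> = 2 * (IL lam c L - 2 * (V \<bullet> V))"
    unfolding cond_var_event_def ce unfolding cond_exp_event_def mA I by simp
  also have "\<dots> = 2 * IL lam c L - 4 * (norm (VL lam c L))^2"
    by (simp add: V_def power2_norm_eq_inner)
  finally show ?thesis .
qed

lemma condvar_limit:
  "(\<lambda>L. lin_cond_var lam \<mu>0 \<mu>1 \<sigma> c L) \<longlonglongrightarrow> 2 * lam^2 * \<sigma>^2 * (1 + 2*\<sigma>^2)^2"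
proof -
  have nm: "norm (mu c) = 1" using n0 n1 by (simp add: mu_def)
  have lim: "(\<lambda>L. 2 * IL lam c L - 4 * (norm (VL lam c L))^2) \<longlonglongrightarrow>
      2 * (4 * lam^2 * (1/2 + \<sigma>^2)^3) - 4 * (norm ((lam * (1/2 + \<sigma>^2)) *\<^sub>R mu c))^2"
    by (intro tendsto_intros IL_limit VL_limit)
  have val: "2 * (4 * lam^2 * (1/2 + \<sigma>^2)^3) - 4 * (norm ((lam * (1/2 + \<sigma>^2)) *\<^sub>R mu c))^2
      = 2 * lam^2 * \<sigma>^2 * (1 + 2*\<sigma>^2)^2"
  proof -
    have "norm ((lam * (1/2 + \<sigma>^2)) *\<^sub>R mu c) = \<bar>lam * (1/2 + \<sigma>^2)\<bar>" using nm by simp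
    then show ?thesis by (simp add: power2_abs power_mult_distrib power2_eq_square power3_eq_cube algebra_simps)
  qed
  have ev: "\<forall>\<^sub>F L in sequentially. 2 * IL lam c L - 4 * (norm (VL lam c L))^2 = lin_cond_var lam \<mu>0 \<mu>1 \<sigma> c L"
    by (intro eventually_sequentiallyI[of 1]) (simp add: condvar_eq)
  show ?thesis using Lim_transform_eventually[OF lim ev] unfolding val .
qed

lemma loss_final:
  "(\<lambda>L. lin_loss ((1 + 4*\<sigma>^2 + 4*\<sigma>^4) / (1 + 6*\<sigma>^2 + 12*\<sigma>^4 + 8*\<sigma>^6)) \<mu>0 \<mu>1 \<sigma> L) \<longlonglongrightarrow> \<sigma>^2 * (real CARD('n) - 2)"
proof -
  have pos: "0 < 1 + 2 * \<sigma>^2" by (simp add: add_pos_nonneg)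
  have e1: "1 + 4*\<sigma>^2 + 4*\<sigma>^4 = (1 + 2*\<sigma>^2)^2" by (simp add: power2_eq_square algebra_simps power4_eq_xxxx)
  have e2: "1 + 6*\<sigma>^2 + 12*\<sigma>^4 + 8*\<sigma>^6 = (1 + 2*\<sigma>^2)^3"
    by (simp add: power2_eq_square power3_eq_cube algebra_simps eval_nat_numeral)
  have lam: "(1 + 4*\<sigma>^2 + 4*\<sigma>^4) / (1 + 6*\<sigma>^2 + 12*\<sigma>^4 + 8*\<sigma>^6) = 1 / (1 + 2*\<sigma>^2)"
  proof -
    have g: "x^2 / x^3 = 1 / x" if "x \<noteq> 0" for x :: real using that by (simp add: power2_eq_square power3_eq_cube)
    show ?thesis unfolding e1 e2 using pos by (intro g) simp
  qed
  have "C5 (1 / (1 + 2*\<sigma>^2)) = \<sigma>^2 * (real CARD('n) - 2)"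
  proof -
    define x where "x = 1 + 2*\<sigma>^2"
    have x0: "x \<noteq> 0" using pos by (simp add: x_def)
    have K: "1/2 + \<sigma>^2 = x / 2" by (simp add: x_def)
    have h1: "8 * (1/x) * (x/2)^2 = 2 * x" using x0 by (simp add: power2_eq_square field_simps)
    have h2: "8 * (1/x)^2 * (x/2)^3 = x" using x0 by (simp add: power2_eq_square power3_eq_cube field_simps)
    have "C5 (1 / x) = 1 + real CARD('n) * \<sigma>^2 - 2 * x + x"
      unfolding C5_def K h1 h2 ..
    also have "\<dots> = \<sigma>^2 * (real CARD('n) - 2)" by (simp add: x_def algebra_simps)
    finally show ?thesis unfolding x_def .
  qed
  then show ?thesis using loss_limit[of "1 / (1 + 2*\<sigma>^2)"] unfolding lam by simp
qed

end

theorem proposition4: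
  fixes \<mu>0 \<mu>1 :: "real^'n" and \<sigma> :: real
  assumes "CARD('n) \<ge> 2"
    and "\<sigma> > 0"
    and "norm \<mu>0 = 1" and "norm \<mu>1 = 1" and "\<mu>0 \<bullet> \<mu>1 = 0"
  shows "(\<lambda>L. lin_loss ((1 + 4*\<sigma>^2 + 4*\<sigma>^4) / (1 + 6*\<sigma>^2 + 12*\<sigma>^4 + 8*\<sigma>^6))
              \<mu>0 \<mu>1 \<sigma> L) \<longlonglongrightarrow> \<sigma>^2 * (real CARD('n) - 2)
    \<and> (\<forall>lam>0. \<forall>c::bool. (\<lambda>L. lin_cond_var lam \<mu>0 \<mu>1 \<sigma> c L)
           \<longlonglongrightarrow> 2 * lam^2 * \<sigma>^2 * (1 + 2*\<sigma>^2)^2)"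
proof -
  interpret S: setting \<mu>0 \<mu>1 \<sigma> using assms by unfold_locales auto
  show ?thesis using S.loss_final S.condvar_limit by blast
qed

end
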